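(* Let $h:\mathbb{R}\to\mathbb{R}$ be a smooth function that is flat at $0$ and positive everywhere else, such that $\xi=h\,\partial/\partial x$ is complete, and let $\psi$ be the time-one flow of $\xi$. Let $\mathbb{R}/{\sim}$ be the orbit space of the $\mathbb{Z}$-action on $\mathbb{R}$ generated by $\psi$, with the quotient diffeology. Then $\mathbb{R}/{\sim}$ is not a diffeological quasifold.
   Context: Diffeology: plots, smooth maps, D-topology, subset and quotient diffeologies are standard. A diffeological $n$-quasifold is a diffeological space, second countable in its D-topology, such that each point has a D-open neighbourhood $U$ diffeomorphic (with its subset diffeology) to $\mathsf V/\Gamma$ (quotient diffeology), where $\Gamma$ is a countable subgroup of the affine group $\mathrm{Aff}(\mathbb{R}^n)$ and $\mathsf V\subseteq\mathbb{R}^n$ is open and $\Gamma$-invariant. A diffeological quasifold is a diffeological $n$-quasifold for some $n$. *)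

theory Defs
  imports "HOL-Analysis.Analysis"
begin

text \<open>Points of R^n are functions x :: nat => real with x i = 0 for i >= n.
  This explicit carrier lets the dimension n vary inside definitions
  (a diffeology quantifies over all n).\<close>

definition Rn :: "nat \<Rightarrow> (nat \<Rightarrow> real) set" where
  "Rn n = {x. \<forall>i\<ge>n. x i = 0}"

definition dist_Rn :: "nat \<Rightarrow> (nat \<Rightarrow> real) \<Rightarrow> (nat \<Rightarrow> real) \<Rightarrow> real" where
  "dist_Rn n x y = sqrt (\<Sum>i<n. (x i - y i)^2)"

definition open_Rn :: "nat \<Rightarrow> (nat \<Rightarrow> real) set \<Rightarrow> bool" where
  "open_Rn n U \<longleftrightarrow> U \<subseteq> Rn n \<and>
     (\<forall>x\<in>U. \<exists>e>0. \<forall>y\<in>Rn n. dist_Rn n x y < e \<longrightarrow> y \<in> U)"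

definition has_partial ::
  "nat \<Rightarrow> (nat \<Rightarrow> real) set \<Rightarrow> ((nat \<Rightarrow> real) \<Rightarrow> real) \<Rightarrow> nat \<Rightarrow> (nat \<Rightarrow> real) \<Rightarrow> real \<Rightarrow> bool" where
  "has_partial n U g i x D \<longleftrightarrow>
     ((\<lambda>t. g (x(i := x i + t))) has_real_derivative D) (at 0 within {t. x(i := x i + t) \<in> U})"

definition partial ::
  "nat \<Rightarrow> (nat \<Rightarrow> real) set \<Rightarrow> ((nat \<Rightarrow> real) \<Rightarrow> real) \<Rightarrow> nat \<Rightarrow> (nat \<Rightarrow> real) \<Rightarrow> real" where
  "partial n U g i x = (THE D. has_partial n U g i x D)"

definition cont_Rn :: "nat \<Rightarrow> (nat \<Rightarrow> real) set \<Rightarrow> ((nat \<Rightarrow> real) \<Rightarrow> real) \<Rightarrow> bool" where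
  "cont_Rn n U g \<longleftrightarrow>
     (\<forall>x\<in>U. \<forall>e>0. \<exists>d>0. \<forall>y\<in>U. dist_Rn n x y < d \<longrightarrow> \<bar>g y - g x\<bar> < e)"

fun Ck :: "nat \<Rightarrow> nat \<Rightarrow> (nat \<Rightarrow> real) set \<Rightarrow> ((nat \<Rightarrow> real) \<Rightarrow> real) \<Rightarrow> bool" where
  "Ck n 0 U g \<longleftrightarrow> cont_Rn n U g"
| "Ck n (Suc k) U g \<longleftrightarrow> cont_Rn n U g \<and>
     (\<forall>i<n. \<forall>x\<in>U. \<exists>D. has_partial n U g i x D) \<and>
     (\<forall>i<n. Ck n k U (partial n U g i))"

definition smooth_scalar :: "nat \<Rightarrow> (nat \<Rightarrow> real) set \<Rightarrow> ((nat \<Rightarrow> real) \<Rightarrow> real) \<Rightarrow> bool" where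
  "smooth_scalar n U g \<longleftrightarrow> (\<forall>k. Ck n k U g)"

definition smooth_Rn ::
  "nat \<Rightarrow> nat \<Rightarrow> (nat \<Rightarrow> real) set \<Rightarrow> ((nat \<Rightarrow> real) \<Rightarrow> (nat \<Rightarrow> real)) \<Rightarrow> bool" where
  "smooth_Rn n m U f \<longleftrightarrow> f ` U \<subseteq> Rn m \<and> (\<forall>j<m. smooth_scalar n U (\<lambda>x. f x j))"

text \<open>A parametrization is given by its dimension n, its (open) domain U in R^n
  and the map itself; dplots S n U p says that p restricted to U is a plot.\<close>
record 'a dspace =
  dcarrier :: "'a set"
  dplots :: "nat \<Rightarrow> (nat \<Rightarrow> real) set \<Rightarrow> ((nat \<Rightarrow> real) \<Rightarrow> 'a) \<Rightarrow> bool"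

definition diffeology :: "'a dspace \<Rightarrow> bool" where
  "diffeology S \<longleftrightarrow>
     (\<forall>n U p. dplots S n U p \<longrightarrow> open_Rn n U \<and> p ` U \<subseteq> dcarrier S)
   \<and> (\<forall>n U p q. dplots S n U p \<and> (\<forall>r\<in>U. p r = q r) \<longrightarrow> dplots S n U q)
   \<and> (\<forall>n U x. open_Rn n U \<and> x \<in> dcarrier S \<longrightarrow> dplots S n U (\<lambda>_. x))
   \<and> (\<forall>n U p. open_Rn n U \<and> p ` U \<subseteq> dcarrier S \<and>
        (\<forall>r\<in>U. \<exists>W. open_Rn n W \<and> r \<in> W \<and> W \<subseteq> U \<and> dplots S n W p)
        \<longrightarrow> dplots S n U p)
   \<and> (\<forall>n U p m V F. dplots S n U p \<and> open_Rn m V \<and> smooth_Rn m n V F \<and> F ` V \<subseteq> U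
        \<longrightarrow> dplots S m V (p \<circ> F))"

definition dsmooth :: "'a dspace \<Rightarrow> 'b dspace \<Rightarrow> ('a \<Rightarrow> 'b) \<Rightarrow> bool" where
  "dsmooth S T F \<longleftrightarrow> F ` dcarrier S \<subseteq> dcarrier T \<and>
     (\<forall>n U p. dplots S n U p \<longrightarrow> dplots T n U (F \<circ> p))"

definition diffeomorphic :: "'a dspace \<Rightarrow> 'b dspace \<Rightarrow> bool" where
  "diffeomorphic S T \<longleftrightarrow> (\<exists>F G. dsmooth S T F \<and> dsmooth T S G \<and>
     (\<forall>x\<in>dcarrier S. G (F x) = x) \<and> (\<forall>y\<in>dcarrier T. F (G y) = y))"

definition D_open :: "'a dspace \<Rightarrow> 'a set \<Rightarrow> bool" where
  "D_open S A \<longleftrightarrow> A \<subseteq> dcarrier S \<and>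
     (\<forall>n U p. dplots S n U p \<longrightarrow> open_Rn n {r\<in>U. p r \<in> A})"

definition D_second_countable :: "'a dspace \<Rightarrow> bool" where
  "D_second_countable S \<longleftrightarrow> (\<exists>B. countable B \<and> (\<forall>b\<in>B. D_open S b) \<and>
     (\<forall>A. D_open S A \<longrightarrow> (\<exists>B'\<subseteq>B. A = \<Union>B')))"

definition subspace :: "'a dspace \<Rightarrow> 'a set \<Rightarrow> 'a dspace" where
  "subspace S A = \<lparr>dcarrier = A, dplots = (\<lambda>n U p. dplots S n U p \<and> p ` U \<subseteq> A)\<rparr>"

definition quotient_space :: "'a dspace \<Rightarrow> ('a \<Rightarrow> 'b) \<Rightarrow> 'b dspace" where
  "quotient_space S proj = \<lparr>dcarrier = proj ` dcarrier S,
     dplots = (\<lambda>n U P. open_Rn n U \<and>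
        (\<forall>r\<in>U. \<exists>W. open_Rn n W \<and> r \<in> W \<and> W \<subseteq> U \<and>
            (\<exists>q. dplots S n W q \<and> (\<forall>s\<in>W. P s = proj (q s)))))\<rparr>"

definition real_space :: "real dspace" where
  "real_space = \<lparr>dcarrier = UNIV, dplots = (\<lambda>m U p. open_Rn m U \<and> smooth_scalar m U p)\<rparr>"

definition open_subset_space :: "nat \<Rightarrow> (nat \<Rightarrow> real) set \<Rightarrow> (nat \<Rightarrow> real) dspace" where
  "open_subset_space n V = \<lparr>dcarrier = V,
     dplots = (\<lambda>m U p. open_Rn m U \<and> smooth_Rn m n U p \<and> p ` U \<subseteq> V)\<rparr>"

definition aff_map :: "nat \<Rightarrow> (nat \<Rightarrow> nat \<Rightarrow> real) \<Rightarrow> (nat \<Rightarrow> real) \<Rightarrow> (nat \<Rightarrow> real) \<Rightarrow> (nat \<Rightarrow> real)" where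
  "aff_map n A b x = (\<lambda>i. if i < n then (\<Sum>j<n. A i j * x j) + b i else 0)"

definition Aff :: "nat \<Rightarrow> ((nat \<Rightarrow> real) \<Rightarrow> (nat \<Rightarrow> real)) set" where
  "Aff n = {g. (\<exists>A b. g = aff_map n A b) \<and> bij_betw g (Rn n) (Rn n)}"

definition aff_id :: "nat \<Rightarrow> (nat \<Rightarrow> real) \<Rightarrow> (nat \<Rightarrow> real)" where
  "aff_id n = aff_map n (\<lambda>i j. if i = j then 1 else 0) (\<lambda>_. 0)"

definition subgroup_Aff :: "nat \<Rightarrow> ((nat \<Rightarrow> real) \<Rightarrow> (nat \<Rightarrow> real)) set \<Rightarrow> bool" where
  "subgroup_Aff n \<Gamma> \<longleftrightarrow> \<Gamma> \<subseteq> Aff n \<and> aff_id n \<in> \<Gamma> \<and>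
     (\<forall>g\<in>\<Gamma>. \<forall>h\<in>\<Gamma>. g \<circ> h \<in> \<Gamma>) \<and>
     (\<forall>g\<in>\<Gamma>. \<exists>h\<in>\<Gamma>. h \<circ> g = aff_id n \<and> g \<circ> h = aff_id n)"

definition orbit_of :: "('x \<Rightarrow> 'x) set \<Rightarrow> 'x \<Rightarrow> 'x set" where
  "orbit_of \<Gamma> x = (\<lambda>g. g x) ` \<Gamma>"

definition orbit_space :: "nat \<Rightarrow> (nat \<Rightarrow> real) set \<Rightarrow> ((nat \<Rightarrow> real) \<Rightarrow> (nat \<Rightarrow> real)) set
    \<Rightarrow> (nat \<Rightarrow> real) set dspace" where
  "orbit_space n V \<Gamma> = quotient_space (open_subset_space n V) (orbit_of \<Gamma>)"

definition quasifold_dim :: "nat \<Rightarrow> 'a dspace \<Rightarrow> bool" where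
  "quasifold_dim n S \<longleftrightarrow> diffeology S \<and> D_second_countable S \<and>
     (\<forall>x\<in>dcarrier S. \<exists>U \<Gamma> V. D_open S U \<and> x \<in> U \<and>
        countable \<Gamma> \<and> subgroup_Aff n \<Gamma> \<and> open_Rn n V \<and> (\<forall>g\<in>\<Gamma>. g ` V \<subseteq> V) \<and>
        diffeomorphic (subspace S U) (orbit_space n V \<Gamma>))"

definition quasifold :: "'a dspace \<Rightarrow> bool" where
  "quasifold S \<longleftrightarrow> (\<exists>n. quasifold_dim n S)"

definition smooth_real_fun :: "(real \<Rightarrow> real) \<Rightarrow> bool" where
  "smooth_real_fun h \<longleftrightarrow> (\<forall>k x. ((deriv ^^ k) h) differentiable (at x))"

definition flat_at :: "(real \<Rightarrow> real) \<Rightarrow> real \<Rightarrow> bool" where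
  "flat_at h a \<longleftrightarrow> (\<forall>k. (deriv ^^ k) h a = 0)"

definition integral_curve :: "(real \<Rightarrow> real) \<Rightarrow> (real \<Rightarrow> real) \<Rightarrow> bool" where
  "integral_curve h \<gamma> \<longleftrightarrow> (\<forall>t. (\<gamma> has_real_derivative h (\<gamma> t)) (at t))"

definition complete_vf :: "(real \<Rightarrow> real) \<Rightarrow> bool" where
  "complete_vf h \<longleftrightarrow> (\<forall>x. \<exists>\<gamma>. \<gamma> 0 = x \<and> integral_curve h \<gamma>)"

definition time_one_flow :: "(real \<Rightarrow> real) \<Rightarrow> (real \<Rightarrow> real) \<Rightarrow> bool" where
  "time_one_flow h \<psi> \<longleftrightarrow> (\<forall>x \<gamma>. \<gamma> 0 = x \<and> integral_curve h \<gamma> \<longrightarrow> \<psi> x = \<gamma> 1)"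

definition Z_orbit :: "(real \<Rightarrow> real) \<Rightarrow> real \<Rightarrow> real set" where
  "Z_orbit \<psi> x = {y. \<exists>k. y = (\<psi> ^^ k) x \<or> x = (\<psi> ^^ k) y}"

end

theory Submission
  imports Defs
begin

locale flowsetup =
  fixes h \<psi> :: "real \<Rightarrow> real"
  assumes sm: "smooth_real_fun h"
    and fl: "flat_at h 0"
    and hpos: "\<forall>x. x \<noteq> 0 \<longrightarrow> h x > 0"
    and cp: "complete_vf h"
    and tof: "time_one_flow h \<psi>"
begin

lemma h_deriv: "(h has_real_derivative deriv h x) (at x)"
proof -
  have "((deriv ^^ 0) h) differentiable (at x)" using sm unfolding smooth_real_fun_def by blast
  then show ?thesis by (simp add: DERIV_deriv_iff_real_differentiable)
qed

lemma dh_deriv: "(deriv h has_real_derivative deriv (deriv h) x) (at x)"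
proof -
  have "((deriv ^^ 1) h) differentiable (at x)" using sm unfolding smooth_real_fun_def by blast
  then show ?thesis by (simp add: DERIV_deriv_iff_real_differentiable)
qed

lemma h_cont: "isCont h x"
  using h_deriv DERIV_isCont by blast

lemma dh_cont: "isCont (deriv h) x"
  using dh_deriv DERIV_isCont by blast

lemma h0: "h 0 = 0"
  using fl unfolding flat_at_def by (metis funpow_0)

lemma dh0: "deriv h 0 = 0"
proof -
  have "(deriv^^1) h 0 = 0" using fl unfolding flat_at_def by blast
  then show ?thesis by simp
qed

lemma h_nonneg: "h x \<ge> 0"
  using hpos h0 by (cases "x = 0") (auto simp: less_imp_le)

lemma h_lip: "\<exists>L\<ge>0. \<forall>z. \<bar>z\<bar> \<le> R \<longrightarrow> \<bar>h z\<bar> \<le> L * \<bar>z\<bar>"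
proof -
  have "compact (deriv h ` {-R..R})"
    by (rule compact_continuous_image) (auto intro!: continuous_at_imp_continuous_on dh_cont)
  then obtain B where B: "\<forall>y\<in>deriv h ` {-R..R}. norm y \<le> B"
    using compact_imp_bounded bounded_iff by metis
  have "\<bar>h z\<bar> \<le> max B 0 * \<bar>z\<bar>" if z: "\<bar>z\<bar> \<le> R" for z
  proof -
    have "norm (h z - h 0) \<le> max B 0 * norm (z - 0)"
    proof (rule field_differentiable_bound[of "{-R..R}" h "deriv h"])
      show "convex {-R..R}" by simp
      show "(h has_field_derivative deriv h y) (at y within {-R..R})" for y
        using h_deriv has_field_derivative_at_within by blast
      show "norm (deriv h y) \<le> max B 0" if "y \<in> {-R..R}" for y using B that by force
      show "z \<in> {-R..R}" using z by auto
      show "0 \<in> {-R..R}" using z by auto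
    qed
    then show ?thesis by (simp add: h0)
  qed
  then show ?thesis by (intro exI[of _ "max B 0"]) auto
qed

lemma curve_cont: "integral_curve h \<beta> \<Longrightarrow> isCont \<beta> t"
  unfolding integral_curve_def using DERIV_isCont by blast

lemma curve_nonvanish:
  assumes ic: "integral_curve h \<beta>" and b0: "\<beta> s0 \<noteq> 0"
  shows "\<beta> s \<noteq> 0"
proof -
  let ?a = "min s0 s" and ?b = "max s0 s"
  have "compact (\<beta> ` {?a..?b})"
    by (rule compact_continuous_image) (auto intro!: continuous_at_imp_continuous_on curve_cont[OF ic])
  then obtain R where R: "\<forall>y\<in>\<beta> ` {?a..?b}. norm y \<le> R"
    using compact_imp_bounded bounded_iff by metis
  obtain L where L: "L \<ge> 0" "\<forall>z. \<bar>z\<bar> \<le> R \<longrightarrow> \<bar>h z\<bar> \<le> L * \<bar>z\<bar>" using h_lip by blast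
  have bnd: "\<beta> x * h (\<beta> x) \<ge> - L * (\<beta> x)\<^sup>2" "\<beta> x * h (\<beta> x) \<le> L * (\<beta> x)\<^sup>2"
    if "?a \<le> x" "x \<le> ?b" for x
  proof -
    have "\<bar>\<beta> x\<bar> \<le> R" using R that by auto
    then have "\<bar>h (\<beta> x)\<bar> \<le> L * \<bar>\<beta> x\<bar>" using L by auto
    then have "\<bar>\<beta> x\<bar> * \<bar>h (\<beta> x)\<bar> \<le> \<bar>\<beta> x\<bar> * (L * \<bar>\<beta> x\<bar>)"
      by (rule mult_left_mono) auto
    also have "\<dots> = L * (\<beta> x)\<^sup>2" by (simp add: power2_eq_square abs_mult_self_eq)
    finally have "\<bar>\<beta> x * h (\<beta> x)\<bar> \<le> L * (\<beta> x)\<^sup>2" by (simp add: abs_mult)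
    then show "\<beta> x * h (\<beta> x) \<ge> - L * (\<beta> x)\<^sup>2" "\<beta> x * h (\<beta> x) \<le> L * (\<beta> x)\<^sup>2" by linarith+
  qed
  have dB: "((\<lambda>x. (\<beta> x)\<^sup>2) has_real_derivative 2 * \<beta> x * h (\<beta> x)) (at x)" for x
    using ic unfolding integral_curve_def
    by (auto intro!: derivative_eq_intros)
  show ?thesis
  proof (cases "s0 \<le> s")
    case True
    let ?Q = "\<lambda>x. exp (2 * L * x) * (\<beta> x)\<^sup>2"
    have "?Q s0 \<le> ?Q s"
    proof (rule DERIV_nonneg_imp_nondecreasing[OF True])
      fix x assume x: "s0 \<le> x" "x \<le> s"
      have "(?Q has_real_derivative exp (2*L*x) * (2*L) * (\<beta> x)\<^sup>2 + exp (2*L*x) * (2 * \<beta> x * h (\<beta> x))) (at x)"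
        by (rule derivative_eq_intros dB refl | simp)+
      moreover have "exp (2*L*x) * (2*L) * (\<beta> x)\<^sup>2 + exp (2*L*x) * (2 * \<beta> x * h (\<beta> x)) \<ge> 0"
      proof -
        have "2*L*(\<beta> x)\<^sup>2 + 2 * (\<beta> x * h (\<beta> x)) \<ge> 0" using bnd(1)[of x] x True by auto
        then have "exp (2*L*x) * (2*L*(\<beta> x)\<^sup>2 + 2 * (\<beta> x * h (\<beta> x))) \<ge> 0" by simp
        then show ?thesis by (simp add: algebra_simps)
      qed
      ultimately show "\<exists>y. (?Q has_real_derivative y) (at x) \<and> 0 \<le> y" by blast
    qed
    moreover have "?Q s0 > 0" using b0 by simp
    ultimately show ?thesis by auto
  next
    case False
    let ?Q = "\<lambda>x. exp (- 2 * L * x) * (\<beta> x)\<^sup>2"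
    have "?Q s \<ge> ?Q s0"
    proof (rule DERIV_nonpos_imp_nonincreasing[of s s0 ?Q])
      show "s \<le> s0" using False by simp
      fix x assume x: "s \<le> x" "x \<le> s0"
      have "(?Q has_real_derivative exp (-2*L*x) * (-2*L) * (\<beta> x)\<^sup>2 + exp (-2*L*x) * (2 * \<beta> x * h (\<beta> x))) (at x)"
        by (rule derivative_eq_intros dB refl | simp)+
      moreover have "exp (-2*L*x) * (-2*L) * (\<beta> x)\<^sup>2 + exp (-2*L*x) * (2 * \<beta> x * h (\<beta> x)) \<le> 0"
      proof -
        have "-2*L*(\<beta> x)\<^sup>2 + 2 * (\<beta> x * h (\<beta> x)) \<le> 0" using bnd(2)[of x] x False by auto
        then have "exp (-2*L*x) * (-2*L*(\<beta> x)\<^sup>2 + 2 * (\<beta> x * h (\<beta> x))) \<le> 0"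
          by (simp add: mult_nonneg_nonpos)
        then show ?thesis by (simp add: algebra_simps)
      qed
      ultimately show "\<exists>y. (?Q has_real_derivative y) (at x) \<and> y \<le> 0" by blast
    qed
    moreover have "?Q s0 > 0" using b0 by simp
    ultimately show ?thesis by auto
  qed
qed

end

context flowsetup
begin

definition c0 :: "real \<Rightarrow> real" where
  "c0 = (SOME \<beta>. \<beta> 0 = 1 \<and> integral_curve h \<beta>)"

lemma c0_props: "c0 0 = 1" "integral_curve h c0"
proof -
  have "\<exists>\<beta>. \<beta> 0 = 1 \<and> integral_curve h \<beta>" using cp unfolding complete_vf_def by blast
  then have "c0 0 = 1 \<and> integral_curve h c0" unfolding c0_def by (rule someI_ex)
  then show "c0 0 = 1" "integral_curve h c0" by auto
qed

lemma c0_deriv: "(c0 has_real_derivative h (c0 s)) (at s)"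
  using c0_props(2) unfolding integral_curve_def by blast

lemma c0_cont: "isCont c0 s"
  using c0_deriv DERIV_isCont by blast

lemma c0_pos: "c0 s > 0"
proof (rule ccontr)
  assume "\<not> c0 s > 0"
  moreover have "c0 s \<noteq> 0" using curve_nonvanish[OF c0_props(2), of 0] c0_props(1) by simp
  ultimately have neg: "c0 s < 0" by simp
  have "\<exists>x. min s 0 \<le> x \<and> x \<le> max s 0 \<and> c0 x = 0"
  proof (cases "s \<le> 0")
    case True
    then show ?thesis using IVT[of c0 s 0 0] neg c0_props(1) c0_cont by auto
  next
    case False
    then show ?thesis using IVT2[of c0 s 0 0] neg c0_props(1) c0_cont by auto
  qed
  then obtain x where "c0 x = 0" by blast
  then show False using curve_nonvanish[OF c0_props(2), of 0 x] c0_props(1) by simp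
qed

lemma hc0_pos: "h (c0 s) > 0"
  using hpos c0_pos by (metis less_irrefl)

lemma c0_mono: assumes "s < s'" shows "c0 s < c0 s'"
  by (rule DERIV_pos_imp_increasing[of s s' c0, OF assms]) (use c0_deriv hc0_pos in blast)

lemma c0_mono_iff: "c0 s < c0 s' \<longleftrightarrow> s < s'"
  using c0_mono[of s s'] c0_mono[of s' s] by (cases s s' rule: linorder_cases) auto

lemma c0_le_iff: "c0 s \<le> c0 s' \<longleftrightarrow> s \<le> s'"
  using c0_mono_iff[of s' s] by linarith

lemma c0_inj: "c0 s = c0 s' \<longleftrightarrow> s = s'"
  using c0_mono[of s s'] c0_mono[of s' s] by (cases s s' rule: linorder_cases) auto

lemma h_min_pos:
  assumes "0 < a" "a \<le> b"
  shows "\<exists>m>0. \<forall>z. a \<le> z \<and> z \<le> b \<longrightarrow> m \<le> h z"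
proof -
  have "\<exists>x\<in>{a..b}. \<forall>y\<in>{a..b}. h x \<le> h y"
    by (rule continuous_attains_inf) (use assms in \<open>auto intro!: continuous_at_imp_continuous_on h_cont\<close>)
  then obtain x where x: "x \<in> {a..b}" "\<forall>y\<in>{a..b}. h x \<le> h y" by blast
  have "h x > 0" using hpos x assms by auto
  then show ?thesis using x by auto
qed

lemma c0_low: "y > 0 \<Longrightarrow> \<exists>s. c0 s < y"
proof (rule ccontr)
  assume y: "y > 0" and nex: "\<not> (\<exists>s. c0 s < y)"
  then have ge: "\<forall>s. y \<le> c0 s" by (simp add: not_less)
  have "c0 (-1) < 1" using c0_mono[of "-1" 0] c0_props(1) by simp
  then have y1: "y < 1" using ge by (meson le_less_trans)
  obtain m where m: "m > 0" "\<forall>z. y \<le> z \<and> z \<le> 1 \<longrightarrow> m \<le> h z"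
    using h_min_pos[of y 1] y y1 by auto
  let ?s = "- 2 / m"
  have "?s < 0" using m by simp
  then obtain z where z: "?s < z" "z < 0" "c0 0 - c0 ?s = (0 - ?s) * h (c0 z)"
    using MVT2[of ?s 0 c0 "\<lambda>x. h (c0 x)"] c0_deriv by blast
  have "c0 z \<le> 1" using c0_mono[of z 0] z c0_props(1) by simp
  then have "m \<le> h (c0 z)" using m ge by auto
  then have "(0 - ?s) * m \<le> (0 - ?s) * h (c0 z)" using \<open>?s < 0\<close> by (intro mult_left_mono) auto
  moreover have "(0 - ?s) * m = 2" using m by simp
  ultimately have "c0 0 - c0 ?s \<ge> 2" using z by linarith
  then show False using c0_props(1) c0_pos[of ?s] by simp
qed

lemma c0_high: "\<exists>s. c0 s > y"
proof (rule ccontr)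
  assume nex: "\<not> (\<exists>s. c0 s > y)"
  then have le: "\<forall>s. c0 s \<le> y" by (simp add: not_less)
  have "1 < c0 1" using c0_mono[of 0 1] c0_props(1) by simp
  then have y1: "1 < y" using le by (meson less_le_trans)
  obtain m where m: "m > 0" "\<forall>z. 1 \<le> z \<and> z \<le> y \<longrightarrow> m \<le> h z"
    using h_min_pos[of 1 y] y1 by auto
  let ?s = "2 * y / m"
  have "?s > 0" using m y1 by simp
  then obtain z where z: "0 < z" "z < ?s" "c0 ?s - c0 0 = (?s - 0) * h (c0 z)"
    using MVT2[of 0 ?s c0 "\<lambda>x. h (c0 x)"] c0_deriv by blast
  have "1 \<le> c0 z" using c0_mono[of 0 z] z c0_props(1) by simp
  then have "m \<le> h (c0 z)" using m le by auto
  then have "?s * m \<le> ?s * h (c0 z)" using \<open>?s > 0\<close> by (intro mult_left_mono) auto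
  moreover have "?s * m = 2 * y" using m by simp
  ultimately have "c0 ?s - 1 \<ge> 2 * y" using z c0_props(1) by simp
  then show False using le[rule_format, of ?s] y1 by simp
qed

lemma c0_surj: "y > 0 \<Longrightarrow> \<exists>s. c0 s = y"
proof -
  assume y: "y > 0"
  obtain s1 where s1: "c0 s1 < y" using c0_low y by blast
  obtain s2 where s2: "c0 s2 > y" using c0_high by blast
  have "s1 \<le> s2" using s1 s2 c0_mono_iff[of s1 s2] by auto
  then show ?thesis using IVT[of c0 s1 y s2] s1 s2 c0_cont by auto
qed

definition th :: "real \<Rightarrow> real" where
  "th y = (THE s. c0 s = y)"

lemma c0_th: "y > 0 \<Longrightarrow> c0 (th y) = y"
proof -
  assume "y > 0"
  then obtain s where s: "c0 s = y" using c0_surj by blast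
  have "(THE s. c0 s = y) = s" using s c0_inj by blast
  then show ?thesis using s unfolding th_def by simp
qed

lemma th_c0: "th (c0 s) = s"
  unfolding th_def using c0_inj by blast

lemma th_mono: "0 < y \<Longrightarrow> y < y' \<Longrightarrow> th y < th y'"
  using c0_mono_iff[of "th y" "th y'"] c0_th[of y] c0_th[of y'] by simp

lemma th_less_iff: "0 < y \<Longrightarrow> th y < s \<longleftrightarrow> y < c0 s"
  using c0_mono_iff[of "th y" s] c0_th[of y] by simp

lemma th_cont: "y > 0 \<Longrightarrow> isCont th y"
proof -
  assume y: "y > 0"
  have "isCont th (c0 (th y))"
    by (rule isCont_inverse_function[of 1]) (auto simp: th_c0 c0_cont)
  then show ?thesis using c0_th y by simp
qed

lemma tof_apply: "\<gamma> 0 = x \<Longrightarrow> integral_curve h \<gamma> \<Longrightarrow> \<psi> x = \<gamma> 1"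
  using tof[unfolded time_one_flow_def, rule_format, of \<gamma> x] by blast

lemma psi0: "\<psi> 0 = 0"
proof -
  have "integral_curve h (\<lambda>_. 0)" unfolding integral_curve_def by (simp add: h0)
  then show ?thesis using tof unfolding time_one_flow_def by (metis (mono_tags))
qed

lemma psi_pos: "x > 0 \<Longrightarrow> \<psi> x = c0 (th x + 1)"
proof -
  assume x: "x > 0"
  let ?b = "\<lambda>s. c0 (s + th x)"
  have "integral_curve h ?b" unfolding integral_curve_def
  proof
    fix t
    have d: "((\<lambda>s. s + th x) has_real_derivative 1) (at t)" by (auto intro!: derivative_eq_intros)
    show "(?b has_real_derivative h (?b t)) (at t)"
      using DERIV_chain2[OF c0_deriv d] by simp
  qed
  moreover have "?b 0 = x" using c0_th x by simp
  ultimately have "\<psi> x = ?b 1" by (intro tof_apply) simp_all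
  then show ?thesis by (simp add: add.commute)
qed

lemma psi_neg: "x < 0 \<Longrightarrow> \<psi> x < 0"
proof -
  assume x: "x < 0"
  obtain \<beta> where b: "\<beta> 0 = x" "integral_curve h \<beta>" using cp unfolding complete_vf_def by blast
  have "\<psi> x = \<beta> 1" using b by (intro tof_apply)
  moreover have "\<beta> 1 < 0"
  proof (rule ccontr)
    assume "\<not> \<beta> 1 < 0"
    then have "\<exists>z. 0 \<le> z \<and> z \<le> 1 \<and> \<beta> z = 0"
      by (intro IVT) (use b x curve_cont[OF b(2)] in auto)
    then obtain z where "0 \<le> z" "z \<le> 1" "\<beta> z = 0" by blast
    then show False using curve_nonvanish[OF b(2), of 0 z] b x by simp
  qed
  ultimately show ?thesis by simp
qed

lemma psi_gt: "x > 0 \<Longrightarrow> \<psi> x > x"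
  using psi_pos[of x] c0_th[of x] c0_mono[of "th x" "th x + 1"] by simp

lemma psi_sign: "(\<psi> y > 0 \<longleftrightarrow> y > 0) \<and> (\<psi> y = 0 \<longleftrightarrow> y = 0)"
  using psi_pos[of y] psi_neg[of y] psi0 c0_pos[of "th y + 1"]
  by (cases y "0::real" rule: linorder_cases) auto

lemma psi_pow_sign: "((\<psi>^^k) y > 0 \<longleftrightarrow> y > 0) \<and> ((\<psi>^^k) y = 0 \<longleftrightarrow> y = 0)"
  by (induction k) (auto simp: psi_sign)

lemma psi_pow_pos: "x > 0 \<Longrightarrow> (\<psi>^^k) x = c0 (th x + real k)"
proof (induction k)
  case 0
  then show ?case by (simp add: c0_th)
next
  case (Suc k)
  then show ?case by (simp add: psi_pos c0_pos th_c0 add_ac)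
qed

lemma orbit0: "Z_orbit \<psi> 0 = {0}"
proof -
  have "(\<psi>^^k) 0 = 0" for k using psi_pow_sign by blast
  moreover have "0 = (\<psi>^^k) y \<Longrightarrow> y = 0" for k y using psi_pow_sign[of k y] by auto
  ultimately show ?thesis unfolding Z_orbit_def by (auto intro: exI[of _ 0])
qed

lemma orbit_pos: "t > 0 \<Longrightarrow> Z_orbit \<psi> t = {y. \<exists>k::int. y = c0 (th t + of_int k)}"
proof -
  assume t: "t > 0"
  show ?thesis
  proof (intro equalityI subsetI)
    fix y assume "y \<in> Z_orbit \<psi> t"
    then obtain k where "y = (\<psi>^^k) t \<or> t = (\<psi>^^k) y" unfolding Z_orbit_def by blast
    then show "y \<in> {y. \<exists>k::int. y = c0 (th t + of_int k)}"
    proof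
      assume "y = (\<psi>^^k) t"
      then show ?thesis using psi_pow_pos t by (auto intro!: exI[of _ "int k"])
    next
      assume tk: "t = (\<psi>^^k) y"
      then have y: "y > 0" using psi_pow_sign[of k y] t by auto
      then have "t = c0 (th y + real k)" using tk psi_pow_pos by simp
      then have "th t = th y + real k" using th_c0 by simp
      then have "y = c0 (th t + of_int (- int k))" using c0_th y by simp
      then show ?thesis by blast
    qed
  next
    fix y assume "y \<in> {y. \<exists>k::int. y = c0 (th t + of_int k)}"
    then obtain k :: int where k: "y = c0 (th t + of_int k)" by blast
    show "y \<in> Z_orbit \<psi> t"
    proof (cases "k \<ge> 0")
      case True
      then have "y = (\<psi>^^(nat k)) t" using psi_pow_pos t k by simp
      then show ?thesis unfolding Z_orbit_def by blast
    next
      case False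
      have y: "y > 0" using k c0_pos by simp
      have "(\<psi>^^(nat (-k))) y = c0 (th y + real (nat (-k)))" using psi_pow_pos y by simp
      also have "\<dots> = t" using False k th_c0 c0_th t by simp
      finally have "t = (\<psi>^^(nat (-k))) y" by simp
      then show ?thesis unfolding Z_orbit_def by blast
    qed
  qed
qed

lemma orbit_self: "y \<in> Z_orbit \<psi> y"
  unfolding Z_orbit_def by (auto intro: exI[of _ 0])

lemma orbit_pos_mem: "t > 0 \<Longrightarrow> y \<in> Z_orbit \<psi> t \<Longrightarrow> y > 0 \<and> (\<exists>k::int. th y = th t + of_int k)"
proof -
  assume "t > 0" "y \<in> Z_orbit \<psi> t"
  then obtain k :: int where "y = c0 (th t + of_int k)" using orbit_pos by blast
  then show ?thesis using c0_pos th_c0 by auto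
qed

lemma orbit_psi: "t > 0 \<Longrightarrow> Z_orbit \<psi> (\<psi> t) = Z_orbit \<psi> t"
proof -
  assume t: "t > 0"
  have pt: "\<psi> t > 0" "th (\<psi> t) = th t + 1" using psi_pos t c0_pos th_c0 by auto
  have "{y. \<exists>k::int. y = c0 (th t + 1 + of_int k)} = {y. \<exists>k::int. y = c0 (th t + of_int k)}"
  proof (intro equalityI subsetI; clarsimp)
    fix k :: int show "\<exists>k'::int. c0 (th t + 1 + of_int k) = c0 (th t + of_int k')"
      by (rule exI[of _ "k+1"]) (simp add: add_ac)
  next
    fix k :: int show "\<exists>k'::int. c0 (th t + of_int k) = c0 (th t + 1 + of_int k')"
      by (rule exI[of _ "k-1"]) simp
  qed
  then show ?thesis using orbit_pos t pt by simp
qed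

end

context flowsetup
begin

lemma c0_small: "\<eta> > 0 \<Longrightarrow> \<exists>S. \<forall>s\<le>S. c0 s < \<eta>"
proof -
  assume "\<eta> > 0"
  then obtain S where "c0 S < \<eta>" using c0_low by blast
  then show ?thesis using c0_le_iff by (intro exI[of _ S]) (meson le_less_trans)
qed

lemma th_small: "\<exists>\<delta>>0. \<forall>y. 0 < y \<and> y < \<delta> \<longrightarrow> th y < S"
  using th_less_iff c0_pos by (intro exI[of _ "c0 S"]) auto

lemma h_ratio: "\<epsilon> > 0 \<Longrightarrow> \<exists>\<eta>>0. \<forall>z. 0 < z \<and> z < \<eta> \<longrightarrow> \<bar>h z / z\<bar> < \<epsilon>"
proof -
  assume e: "\<epsilon> > 0"
  have "((\<lambda>z. (h z - h 0) / (z - 0)) \<longlongrightarrow> 0) (at 0)"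
    using h_deriv[of 0] dh0 by (simp add: has_field_derivative_iff)
  then have "((\<lambda>z. h z / z) \<longlongrightarrow> 0) (at 0)" by (simp add: h0)
  then have "eventually (\<lambda>z. dist (h z / z) 0 < \<epsilon>) (at 0)"
    by (rule tendstoD[OF _ e])
  then obtain d where d: "d > 0" "\<forall>z. z \<noteq> 0 \<and> dist z 0 < d \<longrightarrow> dist (h z / z) 0 < \<epsilon>"
    unfolding eventually_at by auto
  show ?thesis
  proof (intro exI[of _ d] conjI allI impI)
    show "d > 0" by fact
    fix z :: real assume "0 < z \<and> z < d"
    then show "\<bar>h z / z\<bar> < \<epsilon>" using d(2)[rule_format, of z] by (simp add: dist_real_def)
  qed
qed

lemma lnc_deriv: "((\<lambda>x. ln (c0 x)) has_real_derivative h (c0 x) / c0 x) (at x)"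
proof -
  have "((\<lambda>x. ln (c0 x)) has_real_derivative 1 / c0 x * h (c0 x)) (at x)"
    by (rule DERIV_chain2[OF DERIV_ln_divide c0_deriv]) (rule c0_pos)
  then show ?thesis by simp
qed

lemma ratio_lim: "((\<lambda>y. c0 (th y + d) / y) \<longlongrightarrow> 1) (at_right 0)"
proof -
  let ?G = "\<lambda>y. ln (c0 (th y + d)) - ln y"
  have G: "(?G \<longlongrightarrow> 0) (at_right 0)"
  proof (rule tendstoI)
    fix \<epsilon> :: real assume e: "\<epsilon> > 0"
    obtain \<eta> where eta: "\<eta> > 0" "\<forall>z. 0 < z \<and> z < \<eta> \<longrightarrow> \<bar>h z / z\<bar> < \<epsilon> / (\<bar>d\<bar> + 1)"
      using h_ratio[of "\<epsilon> / (\<bar>d\<bar> + 1)"] e by auto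
    obtain S where S: "\<forall>s\<le>S. c0 s < \<eta>" using c0_small eta by blast
    obtain \<delta> where dl: "\<delta> > 0" "\<forall>y. 0 < y \<and> y < \<delta> \<longrightarrow> th y < S - \<bar>d\<bar>" using th_small by blast
    show "eventually (\<lambda>y. dist (?G y) 0 < \<epsilon>) (at_right 0)"
      unfolding eventually_at_right_field
    proof (intro exI[of _ \<delta>] conjI allI impI)
      show "\<delta> > 0" by fact
      fix y :: real assume y: "0 < y" "y < \<delta>"
      let ?s = "th y"
      have s: "?s < S - \<bar>d\<bar>" using dl y by auto
      have "norm (ln (c0 (?s + d)) - ln (c0 ?s)) \<le> \<epsilon> / (\<bar>d\<bar> + 1) * norm ((?s + d) - ?s)"
      proof (rule field_differentiable_bound[of "{?s - \<bar>d\<bar> .. ?s + \<bar>d\<bar>}" _ "\<lambda>x. h (c0 x) / c0 x"])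
        show "convex {?s - \<bar>d\<bar> .. ?s + \<bar>d\<bar>}" by simp
        show "((\<lambda>x. ln (c0 x)) has_field_derivative h (c0 x) / c0 x) (at x within {?s - \<bar>d\<bar> .. ?s + \<bar>d\<bar>})" for x
          using lnc_deriv has_field_derivative_at_within by blast
        show "norm (h (c0 x) / c0 x) \<le> \<epsilon> / (\<bar>d\<bar> + 1)" if "x \<in> {?s - \<bar>d\<bar> .. ?s + \<bar>d\<bar>}" for x
        proof -
          have "x \<le> S" using that s by auto
          then have "c0 x < \<eta>" using S by auto
          then show ?thesis using eta c0_pos[of x] by (auto intro: less_imp_le)
        qed
        show "?s + d \<in> {?s - \<bar>d\<bar> .. ?s + \<bar>d\<bar>}" by auto
        show "?s \<in> {?s - \<bar>d\<bar> .. ?s + \<bar>d\<bar>}" by auto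
      qed
      also have "\<dots> = \<epsilon> * (\<bar>d\<bar> / (\<bar>d\<bar> + 1))" by simp
      also have "\<dots> < \<epsilon>" using e by (simp add: field_simps)
      finally show "dist (?G y) 0 < \<epsilon>" using c0_th y by (simp add: dist_real_def)
    qed
  qed
  then have "((\<lambda>y. exp (?G y)) \<longlongrightarrow> exp 0) (at_right 0)" by (rule tendsto_exp)
  moreover have "eventually (\<lambda>y. exp (?G y) = c0 (th y + d) / y) (at_right (0::real))"
    unfolding eventually_at_right_field
    by (intro exI[of _ 1]) (auto simp: exp_diff c0_pos)
  ultimately show ?thesis by (simp add: tendsto_cong)
qed

lemma psi_small: "\<eta> > 0 \<Longrightarrow> \<exists>\<delta>>0. \<forall>t. 0 < t \<and> t < \<delta> \<longrightarrow> \<psi> t < \<eta>"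
proof -
  assume "\<eta> > 0"
  then obtain S where S: "\<forall>s\<le>S. c0 s < \<eta>" using c0_small by blast
  obtain \<delta> where dl: "\<delta> > 0" "\<forall>y. 0 < y \<and> y < \<delta> \<longrightarrow> th y < S - 1" using th_small by blast
  show ?thesis using dl S psi_pos by (intro exI[of _ \<delta>]) auto
qed

lemma hc_ratio:
  obtains L where "L \<ge> 0" "\<And>s. s \<le> -1 \<Longrightarrow> h (c0 (s + 1)) \<le> exp L * h (c0 s)"
proof -
  have "compact (deriv h ` {0..1})"
    by (rule compact_continuous_image) (auto intro!: continuous_at_imp_continuous_on dh_cont)
  then obtain B where B: "\<forall>y\<in>deriv h ` {0..1}. norm y \<le> B"
    using compact_imp_bounded bounded_iff by metis
  let ?L = "max B 0"
  have "h (c0 (s + 1)) \<le> exp ?L * h (c0 s)" if s: "s \<le> -1" for s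
  proof -
    have der: "((\<lambda>x. ln (h (c0 x))) has_real_derivative deriv h (c0 x)) (at x)" for x
    proof -
      have "((\<lambda>x. h (c0 x)) has_real_derivative deriv h (c0 x) * h (c0 x)) (at x)"
        by (rule DERIV_chain2[OF h_deriv c0_deriv])
      then have "((\<lambda>x. ln (h (c0 x))) has_real_derivative 1 / h (c0 x) * (deriv h (c0 x) * h (c0 x))) (at x)"
        using DERIV_chain2[where f=ln and g="\<lambda>x. h (c0 x)", OF DERIV_ln_divide[OF hc0_pos[of x]]] by blast
      then show ?thesis using hc0_pos[of x] by simp
    qed
    have "norm (ln (h (c0 (s+1))) - ln (h (c0 s))) \<le> ?L * norm ((s+1) - s)"
    proof (rule field_differentiable_bound[of "{s..s+1}" _ "\<lambda>x. deriv h (c0 x)"])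
      show "convex {s..s+1}" by simp
      show "((\<lambda>x. ln (h (c0 x))) has_field_derivative deriv h (c0 x)) (at x within {s..s+1})" for x
        using der has_field_derivative_at_within by blast
      show "norm (deriv h (c0 x)) \<le> ?L" if "x \<in> {s..s+1}" for x
      proof -
        have "c0 x \<le> 1" using c0_le_iff[of x 0] c0_props(1) that s by auto
        then have "c0 x \<in> {0..1}" using c0_pos[of x] by auto
        then have "norm (deriv h (c0 x)) \<le> B" using B by blast
        then show ?thesis by linarith
      qed
    qed auto
    then have "ln (h (c0 (s+1))) \<le> ln (h (c0 s)) + ?L" by simp
    then have "exp (ln (h (c0 (s+1)))) \<le> exp (ln (h (c0 s)) + ?L)" by simp
    then show ?thesis using hc0_pos by (simp add: exp_add mult.commute)
  qed
  then show ?thesis using that[of ?L] by auto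
qed

lemma psi_lip: "\<exists>\<delta>>0. \<exists>B>0. \<forall>t1 t2. 0 < t1 \<and> t1 < t2 \<and> t2 < \<delta> \<longrightarrow> \<psi> t2 - \<psi> t1 \<le> B * (t2 - t1)"
proof -
  obtain L where L: "L \<ge> 0" "\<And>s. s \<le> -1 \<Longrightarrow> h (c0 (s + 1)) \<le> exp L * h (c0 s)"
    using hc_ratio by blast
  let ?F = "\<lambda>x. c0 (x + 1) - exp L * c0 x"
  have Fmono: "?F s2 \<le> ?F s1" if "s1 \<le> s2" "s2 \<le> -1" for s1 s2
  proof (rule DERIV_nonpos_imp_nonincreasing[of s1 s2 ?F])
    show "s1 \<le> s2" by fact
    fix x assume x: "s1 \<le> x" "x \<le> s2"
    have d1: "((\<lambda>x. x + 1) has_real_derivative 1) (at x)" by (auto intro!: derivative_eq_intros)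
    have "(?F has_real_derivative h (c0 (x+1)) * 1 - exp L * h (c0 x)) (at x)"
      by (intro DERIV_diff DERIV_cmult DERIV_chain2[OF c0_deriv d1] c0_deriv)
    moreover have "h (c0 (x+1)) * 1 - exp L * h (c0 x) \<le> 0" using L(2)[of x] x that by simp
    ultimately show "\<exists>y. (?F has_real_derivative y) (at x) \<and> y \<le> 0" by blast
  qed
  have key: "\<forall>t1 t2. 0 < t1 \<and> t1 < t2 \<and> t2 < c0 (-1) \<longrightarrow> \<psi> t2 - \<psi> t1 \<le> exp L * (t2 - t1)"
  proof (intro allI impI)
    fix t1 t2 :: real assume t: "0 < t1 \<and> t1 < t2 \<and> t2 < c0 (-1)"
    have s: "th t1 \<le> th t2" "th t2 \<le> -1"
      using th_mono[of t1 t2] th_less_iff[of t2 "-1"] t by auto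
    have "?F (th t2) \<le> ?F (th t1)" using Fmono s by blast
    then show "\<psi> t2 - \<psi> t1 \<le> exp L * (t2 - t1)"
      using t psi_pos[of t1] psi_pos[of t2] c0_th[of t1] c0_th[of t2] by (simp add: algebra_simps)
  qed
  then show ?thesis using c0_pos[of "-1"] exp_gt_zero[of L] by blast
qed

end

lemma open_Rn_sub: "open_Rn n W \<Longrightarrow> W \<subseteq> Rn n"
  unfolding open_Rn_def by blast

lemma upd_in_Rn: "x \<in> Rn n \<Longrightarrow> i < n \<Longrightarrow> x(i := a) \<in> Rn n"
  unfolding Rn_def by auto

lemma dist_upd: assumes "i < n" shows "dist_Rn n (x(i := a)) (x(i := b)) = \<bar>a - b\<bar>"
proof -
  have "(\<Sum>j<n. ((x(i := a)) j - (x(i := b)) j)\<^sup>2) = (\<Sum>j<n. if j = i then (a - b)\<^sup>2 else 0)"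
    by (rule sum.cong) auto
  also have "\<dots> = (a - b)\<^sup>2" using assms by simp
  finally show ?thesis unfolding dist_Rn_def by simp
qed

lemma coord_le_dist: assumes "j < n" shows "\<bar>x j - y j\<bar> \<le> dist_Rn n x y"
proof -
  have "(x j - y j)\<^sup>2 \<le> (\<Sum>i<n. (x i - y i)\<^sup>2)"
    by (rule member_le_sum[of j "{..<n}" "\<lambda>i. (x i - y i)\<^sup>2"]) (use assms in auto)
  then have "sqrt ((x j - y j)\<^sup>2) \<le> dist_Rn n x y" unfolding dist_Rn_def by (rule real_sqrt_le_mono)
  then show ?thesis by simp
qed

lemma dist_Rn_commute: "dist_Rn n x y = dist_Rn n y x"
  unfolding dist_Rn_def by (simp add: power2_commute)

lemma line_set_open:
  assumes W: "open_Rn n W" and x: "x \<in> W" and i: "i < n"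
  shows "open {t. x(i := x i + t) \<in> W}"
  unfolding open_dist
proof (intro ballI)
  fix t assume "t \<in> {t. x(i := x i + t) \<in> W}"
  then have tW: "x(i := x i + t) \<in> W" by simp
  then obtain e where e: "e > 0" "\<forall>y\<in>Rn n. dist_Rn n (x(i := x i + t)) y < e \<longrightarrow> y \<in> W"
    using W unfolding open_Rn_def by blast
  have xR: "x \<in> Rn n" using W x open_Rn_sub by blast
  show "\<exists>e>0. \<forall>y. dist y t < e \<longrightarrow> y \<in> {t. x(i := x i + t) \<in> W}"
  proof (intro exI[of _ e] conjI allI impI)
    fix s :: real assume "dist s t < e"
    moreover have "dist_Rn n (x(i := x i + t)) (x(i := x i + s)) = \<bar>t - s\<bar>"
      using dist_upd[OF i] by simp
    ultimately show "s \<in> {t. x(i := x i + t) \<in> W}"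
      using e upd_in_Rn[OF xR i] by (auto simp: dist_real_def abs_minus_commute)
  qed (use e in auto)
qed

lemma has_partial_iff:
  assumes W: "open_Rn n W" and x: "x \<in> W" and i: "i < n"
  shows "has_partial n W g i x D \<longleftrightarrow> ((\<lambda>t. g (x(i := x i + t))) has_real_derivative D) (at 0)"
proof -
  have "0 \<in> {t. x(i := x i + t) \<in> W}" using x by simp
  then have "at (0::real) within {t. x(i := x i + t) \<in> W} = at 0"
    by (rule at_within_open[OF _ line_set_open[OF W x i]])
  then show ?thesis unfolding has_partial_def by simp
qed

lemma partial_eq:
  assumes W: "open_Rn n W" and x: "x \<in> W" and i: "i < n" and hp: "has_partial n W g i x D"
  shows "partial n W g i x = D"
proof -
  have "D' = D" if "has_partial n W g i x D'" for D'
  proof -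
    have "((\<lambda>t. g (x(i := x i + t))) has_real_derivative D') (at 0)"
      using that has_partial_iff[OF W x i] by blast
    moreover have "((\<lambda>t. g (x(i := x i + t))) has_real_derivative D) (at 0)"
      using hp has_partial_iff[OF W x i] by blast
    ultimately show ?thesis by (rule DERIV_unique)
  qed
  then show ?thesis unfolding partial_def using hp by blast
qed

lemma has_partial_cong:
  assumes x: "x \<in> W" and eq: "\<forall>y\<in>W. g y = g' y"
  shows "has_partial n W g i x D \<longleftrightarrow> has_partial n W g' i x D"
  unfolding has_partial_def
  by (rule has_field_derivative_cong_ev) (use x eq in auto)

lemma partial_cong:
  assumes x: "x \<in> W" and eq: "\<forall>y\<in>W. g y = g' y"
  shows "partial n W g i x = partial n W g' i x"
proof -
  have "has_partial n W g i x = has_partial n W g' i x" using has_partial_cong[OF x eq] by blast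
  then show ?thesis unfolding partial_def by simp
qed

lemma cont_Rn_cong: "\<forall>y\<in>W. g y = g' y \<Longrightarrow> cont_Rn n W g = cont_Rn n W g'"
  unfolding cont_Rn_def by simp

lemma Ck_cong: "\<forall>y\<in>W. g y = g' y \<Longrightarrow> Ck n k W g = Ck n k W g'"
proof (induction k arbitrary: g g')
  case 0
  then show ?case using cont_Rn_cong by simp
next
  case (Suc k)
  have "Ck n k W (partial n W g i) = Ck n k W (partial n W g' i)" for i
    using Suc.IH partial_cong Suc.prems by blast
  moreover have "(\<exists>D. has_partial n W g i x D) = (\<exists>D. has_partial n W g' i x D)" if "x \<in> W" for i x
    using has_partial_cong[OF that Suc.prems] by simp
  ultimately show ?case using cont_Rn_cong[OF Suc.prems] by simp
qed

lemma cont_const: "cont_Rn n W (\<lambda>_. a)"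
  unfolding cont_Rn_def by auto

lemma Ck_const: assumes W: "open_Rn n W" shows "Ck n k W (\<lambda>_. a)"
proof (induction k arbitrary: a)
  case 0
  then show ?case by (simp add: cont_const)
next
  case (Suc k)
  have hp: "has_partial n W (\<lambda>_. a) i x 0" if "x \<in> W" "i < n" for i x
    using has_partial_iff[OF W that] by simp
  have "Ck n k W (partial n W (\<lambda>_. a) i)" if "i < n" for i
  proof -
    have "\<forall>y\<in>W. partial n W (\<lambda>_. a) i y = 0" using partial_eq[OF W _ that hp] that by blast
    then have "Ck n k W (partial n W (\<lambda>_. a) i) = Ck n k W (\<lambda>_. 0)" by (rule Ck_cong)
    then show ?thesis using Suc.IH by simp
  qed
  then show ?case using hp cont_const by auto
qed

lemma cont_coord: assumes "j < n" shows "cont_Rn n W (\<lambda>x. x j)"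
  unfolding cont_Rn_def
proof (intro ballI allI impI)
  fix x e assume "x \<in> W" "(e::real) > 0"
  show "\<exists>d>0. \<forall>y\<in>W. dist_Rn n x y < d \<longrightarrow> \<bar>y j - x j\<bar> < e"
  proof (intro exI[of _ e] conjI ballI impI)
    fix y assume "y \<in> W" "dist_Rn n x y < e"
    moreover have "\<bar>x j - y j\<bar> \<le> dist_Rn n x y" by (rule coord_le_dist[OF assms])
    ultimately show "\<bar>y j - x j\<bar> < e" by (simp add: abs_minus_commute)
  qed fact
qed

lemma Ck_coord: assumes W: "open_Rn n W" and j: "j < n" shows "Ck n k W (\<lambda>x. x j)"
proof (cases k)
  case 0
  then show ?thesis using cont_coord[OF j] by simp
next
  case (Suc k')
  have hp: "has_partial n W (\<lambda>x. x j) i x (if i = j then 1 else 0)" if "x \<in> W" "i < n" for i x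
  proof -
    have "((\<lambda>t. (x(i := x i + t)) j) has_real_derivative (if i = j then 1 else 0)) (at 0)"
      by (cases "i = j") (auto intro!: derivative_eq_intros)
    then show ?thesis using has_partial_iff[OF W that] by simp
  qed
  have "Ck n k' W (partial n W (\<lambda>x. x j) i)" if "i < n" for i
  proof -
    have "\<forall>y\<in>W. partial n W (\<lambda>x. x j) i y = (if i = j then 1 else 0)"
      using partial_eq[OF W _ that hp] that by blast
    then have "Ck n k' W (partial n W (\<lambda>x. x j) i) = Ck n k' W (\<lambda>_. if i = j then 1 else 0)"
      by (rule Ck_cong)
    then show ?thesis using Ck_const[OF W] by simp
  qed
  then show ?thesis using Suc hp cont_coord[OF j] by auto
qed

lemma smooth_coord: "open_Rn n W \<Longrightarrow> j < n \<Longrightarrow> smooth_scalar n W (\<lambda>x. x j)"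
  unfolding smooth_scalar_def using Ck_coord by blast

lemma smooth_id: "open_Rn n W \<Longrightarrow> smooth_Rn n n W (\<lambda>x. x)"
  unfolding smooth_Rn_def using smooth_coord open_Rn_sub by fastforce

lemma smooth_cont: "smooth_scalar n W g \<Longrightarrow> cont_Rn n W g"
proof -
  assume "smooth_scalar n W g"
  then have "Ck n 0 W g" unfolding smooth_scalar_def by blast
  then show ?thesis by simp
qed

section \<open>One-dimensional extraction\<close>

definition emb1 :: "real \<Rightarrow> nat \<Rightarrow> real" where
  "emb1 u = (\<lambda>i. if i = 0 then u else 0)"

lemma emb1_Rn: "emb1 u \<in> Rn 1"
  unfolding emb1_def Rn_def by auto

lemma Rn1_emb: "x \<in> Rn 1 \<Longrightarrow> x = emb1 (x 0)"
  unfolding emb1_def Rn_def by auto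

lemma emb1_0 [simp]: "emb1 u 0 = u"
  unfolding emb1_def by simp

lemma emb1_inj [simp]: "emb1 u = emb1 v \<longleftrightarrow> u = v"
proof
  assume "emb1 u = emb1 v"
  then have "emb1 u 0 = emb1 v 0" by simp
  then show "u = v" by simp
qed simp

lemma dist_emb1: "dist_Rn 1 (emb1 u) (emb1 v) = \<bar>u - v\<bar>"
  unfolding dist_Rn_def emb1_def by simp

lemma emb1_upd: "(emb1 u)(0 := emb1 u 0 + t) = emb1 (u + t)"
  unfolding emb1_def by auto

lemma emb1_upd' [simp]: "(emb1 u)(0 := a) = emb1 a"
  unfolding emb1_def by auto

lemma open_pre1:
  assumes W: "open_Rn 1 W"
  shows "open {u. emb1 u \<in> W}"
  unfolding open_dist
proof (intro ballI)
  fix u assume "u \<in> {u. emb1 u \<in> W}"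
  then obtain e where e: "e > 0" "\<forall>y\<in>Rn 1. dist_Rn 1 (emb1 u) y < e \<longrightarrow> y \<in> W"
    using W unfolding open_Rn_def by auto
  show "\<exists>e>0. \<forall>y. dist y u < e \<longrightarrow> y \<in> {u. emb1 u \<in> W}"
    using e emb1_Rn dist_emb1 by (intro exI[of _ e]) (auto simp: dist_real_def abs_minus_commute)
qed

lemma cont1_on:
  assumes "cont_Rn 1 W p"
  shows "continuous_on {u. emb1 u \<in> W} (\<lambda>u. p (emb1 u))"
  unfolding continuous_on_iff
proof (intro ballI allI impI)
  fix u e assume u: "u \<in> {u. emb1 u \<in> W}" and e: "(e::real) > 0"
  obtain d where d: "d > 0" "\<forall>y\<in>W. dist_Rn 1 (emb1 u) y < d \<longrightarrow> \<bar>p y - p (emb1 u)\<bar> < e"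
    using assms u e unfolding cont_Rn_def by force
  show "\<exists>d>0. \<forall>x'\<in>{u. emb1 u \<in> W}. dist x' u < d \<longrightarrow> dist (p (emb1 x')) (p (emb1 u)) < e"
    using d dist_emb1 by (intro exI[of _ d]) (auto simp: dist_real_def abs_minus_commute)
qed

lemma smooth1_extract:
  assumes W: "open_Rn 1 W" and sm: "smooth_scalar 1 W q"
  shows "\<forall>u\<in>{u. emb1 u \<in> W}. ((\<lambda>u. q (emb1 u)) has_real_derivative partial 1 W q 0 (emb1 u)) (at u)"
    and "continuous_on {u. emb1 u \<in> W} (\<lambda>u. partial 1 W q 0 (emb1 u))"
proof -
  have C2: "Ck 1 (Suc (Suc 0)) W q" using sm unfolding smooth_scalar_def by blast
  then have hp: "\<forall>x\<in>W. \<exists>D. has_partial 1 W q 0 x D" by simp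
  have "Ck 1 (Suc 0) W (partial 1 W q 0)" using C2 by simp
  then have "cont_Rn 1 W (partial 1 W q 0)" by simp
  then show "continuous_on {u. emb1 u \<in> W} (\<lambda>u. partial 1 W q 0 (emb1 u))" by (rule cont1_on)
  show "\<forall>u\<in>{u. emb1 u \<in> W}. ((\<lambda>u. q (emb1 u)) has_real_derivative partial 1 W q 0 (emb1 u)) (at u)"
  proof
    fix u assume u: "u \<in> {u. emb1 u \<in> W}"
    then obtain D where D: "has_partial 1 W q 0 (emb1 u) D" using hp by auto
    then have "partial 1 W q 0 (emb1 u) = D" using partial_eq[OF W _ _ D] u by simp
    moreover have "((\<lambda>t. q (emb1 (t + u))) has_real_derivative D) (at 0)"
      using D has_partial_iff[OF W, where x="emb1 u" and g=q and i=0 and D=D] u by (simp add: emb1_upd add.commute)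
    then have "((\<lambda>t. q (emb1 t)) has_real_derivative D) (at (0 + u))"
      using DERIV_shift[of "\<lambda>t. q (emb1 t)" D 0 u] by simp
    ultimately show "((\<lambda>u. q (emb1 u)) has_real_derivative partial 1 W q 0 (emb1 u)) (at u)" by simp
  qed
qed

definition pp :: "(nat \<Rightarrow> real) \<Rightarrow> real \<Rightarrow> real \<Rightarrow> nat \<Rightarrow> real" where
  "pp x0 t y = x0(0 := x0 0 + t, Suc 0 := x0 (Suc 0) + y)"

lemma pp_Rn: "x0 \<in> Rn n \<Longrightarrow> 2 \<le> n \<Longrightarrow> pp x0 t y \<in> Rn n"
  unfolding pp_def Rn_def by auto

lemma pp_00: "pp x0 0 0 = x0"
  unfolding pp_def by auto

lemma pp_1: "pp x0 t y (Suc 0) = x0 (Suc 0) + y"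
  unfolding pp_def by auto

lemma dist_pp:
  assumes n: "2 \<le> n"
  shows "dist_Rn n (pp x0 t y) (pp x0 t' y') = sqrt ((t - t')\<^sup>2 + (y - y')\<^sup>2)"
proof -
  let ?g = "\<lambda>j. (pp x0 t y j - pp x0 t' y' j)\<^sup>2"
  have "(\<Sum>j<n. ?g j) = (\<Sum>j\<in>{0, Suc 0}. ?g j)"
    by (rule sum.mono_neutral_right) (use n in \<open>auto simp: pp_def\<close>)
  also have "\<dots> = (t - t')\<^sup>2 + (y - y')\<^sup>2" by (simp add: pp_def)
  finally show ?thesis unfolding dist_Rn_def by simp
qed

lemma sqrt_sum_le: "sqrt (a\<^sup>2 + b\<^sup>2) \<le> \<bar>a\<bar> + \<bar>b\<bar>"
proof -
  have "a\<^sup>2 + b\<^sup>2 \<le> (\<bar>a\<bar> + \<bar>b\<bar>)\<^sup>2" by (simp add: power2_eq_square algebra_simps)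
  then have "sqrt (a\<^sup>2 + b\<^sup>2) \<le> sqrt ((\<bar>a\<bar> + \<bar>b\<bar>)\<^sup>2)" by (rule real_sqrt_le_mono)
  then show ?thesis by simp
qed

lemma no_countable_fibers:
  assumes W: "open_Rn n W" and n: "2 \<le> n" and x0: "x0 \<in> W" and cf: "cont_Rn n W f"
    and fib: "\<forall>s\<in>W. countable {s'\<in>W. f s' = f s}"
  shows False
proof -
  have x0R: "x0 \<in> Rn n" using W x0 open_Rn_sub by blast
  obtain e where e: "e > 0" "\<forall>y\<in>Rn n. dist_Rn n x0 y < e \<longrightarrow> y \<in> W"
    using W x0 unfolding open_Rn_def by blast
  define r where "r = e / 4"
  have r: "r > 0" using e by (simp add: r_def)
  have inW: "pp x0 t y \<in> W" if "\<bar>t\<bar> \<le> r" "\<bar>y\<bar> \<le> r" for t y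
  proof -
    have "dist_Rn n x0 (pp x0 t y) = sqrt ((0 - t)\<^sup>2 + (0 - y)\<^sup>2)"
      using dist_pp[OF n, of x0 0 0 t y] by (simp add: pp_00)
    also have "\<dots> \<le> \<bar>0 - t\<bar> + \<bar>0 - y\<bar>" by (rule sqrt_sum_le)
    also have "\<dots> < e" using that e by (simp add: r_def)
    finally show ?thesis using e pp_Rn[OF x0R n] by blast
  qed
  have contline: "continuous_on {0..r} (\<lambda>t. f (pp x0 t y))" if "\<bar>y\<bar> \<le> r" for y
    unfolding continuous_on_iff
  proof (intro ballI allI impI)
    fix t \<epsilon> assume t: "t \<in> {0..r}" and eps: "(\<epsilon>::real) > 0"
    have "pp x0 t y \<in> W" using inW t that by auto
    then obtain d where d: "d > 0" "\<forall>z\<in>W. dist_Rn n (pp x0 t y) z < d \<longrightarrow> \<bar>f z - f (pp x0 t y)\<bar> < \<epsilon>"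
      using cf eps unfolding cont_Rn_def by blast
    show "\<exists>d>0. \<forall>t'\<in>{0..r}. dist t' t < d \<longrightarrow> dist (f (pp x0 t' y)) (f (pp x0 t y)) < \<epsilon>"
    proof (intro exI[of _ d] conjI ballI impI)
      fix t' assume t': "t' \<in> {0..r}" "dist t' t < d"
      have "dist_Rn n (pp x0 t y) (pp x0 t' y) = \<bar>t - t'\<bar>" using dist_pp[OF n] by simp
      then show "dist (f (pp x0 t' y)) (f (pp x0 t y)) < \<epsilon>"
        using d t' inW[of t' y] that by (auto simp: dist_real_def abs_minus_commute)
    qed fact
  qed
  obtain t1 where t1: "t1 \<in> {0..r}" "f (pp x0 t1 0) \<noteq> f x0"
  proof -
    have "\<exists>t1\<in>{0..r}. f (pp x0 t1 0) \<noteq> f x0"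
    proof (rule ccontr)
      assume "\<not> ?thesis"
      then have sub: "(\<lambda>t. pp x0 t 0) ` {0<..<r} \<subseteq> {s'\<in>W. f s' = f x0}" using inW r by auto
      have "countable ((\<lambda>t. pp x0 t 0) ` {0<..<r})" using countable_subset[OF sub] fib x0 by blast
      moreover have "inj_on (\<lambda>t. pp x0 t 0) {0<..<r}"
      proof (rule inj_onI)
        fix a b assume "pp x0 a 0 = pp x0 b 0"
        then have "pp x0 a 0 0 = pp x0 b 0 0" by simp
        then show "a = b" by (simp add: pp_def)
      qed
      ultimately have "countable {0<..<r}" by (rule countable_image_inj_on)
      then show False using uncountable_open_interval r by blast
    qed
    then show ?thesis using that by blast
  qed
  let ?a = "f x0" and ?b = "f (pp x0 t1 0)"
  define s where "s = (?a + ?b) / 2"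
  define \<epsilon> where "\<epsilon> = \<bar>?b - ?a\<bar> / 2"
  have eps: "\<epsilon> > 0" using t1 by (simp add: \<epsilon>_def)
  obtain d1 where d1: "d1 > 0" "\<forall>z\<in>W. dist_Rn n x0 z < d1 \<longrightarrow> \<bar>f z - ?a\<bar> < \<epsilon>"
    using cf eps x0 unfolding cont_Rn_def by blast
  obtain d2 where d2: "d2 > 0" "\<forall>z\<in>W. dist_Rn n (pp x0 t1 0) z < d2 \<longrightarrow> \<bar>f z - ?b\<bar> < \<epsilon>"
  proof -
    have "pp x0 t1 0 \<in> W" using inW[of t1 0] t1 r by auto
    then show ?thesis using cf[unfolded cont_Rn_def, rule_format, OF _ eps] that by blast
  qed
  define \<eta> where "\<eta> = min (min d1 d2) r"
  have eta: "\<eta> > 0" using d1 d2 r by (simp add: \<eta>_def)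
  have hit: "\<exists>t\<in>{0..r}. f (pp x0 t y) = s" if y: "\<bar>y\<bar> < \<eta>" for y
  proof -
    have yr: "\<bar>y\<bar> \<le> r" using y by (simp add: \<eta>_def)
    have "dist_Rn n x0 (pp x0 0 y) = \<bar>y\<bar>" using dist_pp[OF n, of x0 0 0 0 y] by (simp add: pp_00)
    then have A: "\<bar>f (pp x0 0 y) - ?a\<bar> < \<epsilon>" using d1 y inW[of 0 y] yr r by (simp add: \<eta>_def)
    have "dist_Rn n (pp x0 t1 0) (pp x0 t1 y) = \<bar>y\<bar>" using dist_pp[OF n, of x0 t1 0 t1 y] by simp
    then have B: "\<bar>f (pp x0 t1 y) - ?b\<bar> < \<epsilon>" using d2 y inW[of t1 y] yr t1 by (simp add: \<eta>_def)
    have t1r: "0 \<le> t1" "t1 \<le> r" using t1 by auto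
    have cont': "continuous_on {0..t1} (\<lambda>t. f (pp x0 t y))"
      using continuous_on_subset[OF contline[OF yr]] t1r by auto
    show ?thesis
    proof (cases "?a < ?b")
      case True
      have "f (pp x0 0 y) \<le> s" using A True unfolding s_def \<epsilon>_def by (auto simp: abs_if split: if_split_asm)
      moreover have "s \<le> f (pp x0 t1 y)" using B True unfolding s_def \<epsilon>_def by (auto simp: abs_if split: if_split_asm)
      ultimately have "f (pp x0 0 y) \<le> s" "s \<le> f (pp x0 t1 y)" by auto
      then obtain t where "0 \<le> t" "t \<le> t1" "f (pp x0 t y) = s"
        using IVT'[of "\<lambda>t. f (pp x0 t y)" 0 s t1] cont' t1r by auto
      then show ?thesis using t1r by (intro bexI[of _ t]) auto
    next
      case False
      then have "?b < ?a" using t1 by auto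
      have "f (pp x0 t1 y) \<le> s" using B \<open>?b < ?a\<close> unfolding s_def \<epsilon>_def by (auto simp: abs_if split: if_split_asm)
      moreover have "s \<le> f (pp x0 0 y)" using A \<open>?b < ?a\<close> unfolding s_def \<epsilon>_def by (auto simp: abs_if split: if_split_asm)
      ultimately have "f (pp x0 t1 y) \<le> s" "s \<le> f (pp x0 0 y)" by auto
      then obtain t where "0 \<le> t" "t \<le> t1" "f (pp x0 t y) = s"
        using IVT2'[of "\<lambda>t. f (pp x0 t y)" t1 s 0] cont' t1r by auto
      then show ?thesis using t1r by (intro bexI[of _ t]) auto
    qed
  qed
  define T where "T y = (SOME t. t \<in> {0..r} \<and> f (pp x0 t y) = s)" for y
  have T: "T y \<in> {0..r} \<and> f (pp x0 (T y) y) = s" if "\<bar>y\<bar> < \<eta>" for y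
  proof -
    from hit[OF that] have "\<exists>t. t \<in> {0..r} \<and> f (pp x0 t y) = s" by blast
    then show ?thesis unfolding T_def by (rule someI_ex)
  qed
  let ?w = "pp x0 (T 0) 0"
  have w: "?w \<in> W" "f ?w = s" using T[of 0] eta inW[of "T 0" 0] r by auto
  have sub: "(\<lambda>y. pp x0 (T y) y) ` {-\<eta><..<\<eta>} \<subseteq> {s'\<in>W. f s' = f ?w}"
  proof
    fix z assume "z \<in> (\<lambda>y. pp x0 (T y) y) ` {-\<eta><..<\<eta>}"
    then obtain y where "y \<in> {-\<eta><..<\<eta>}" "z = pp x0 (T y) y" by blast
    then have y: "\<bar>y\<bar> < \<eta>" "z = pp x0 (T y) y" by auto
    have "\<bar>y\<bar> \<le> r" using y by (simp add: \<eta>_def)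
    then show "z \<in> {s'\<in>W. f s' = f ?w}" using T[OF y(1)] inW[of "T y" y] y w by auto
  qed
  have "countable ((\<lambda>y. pp x0 (T y) y) ` {-\<eta><..<\<eta>})" using countable_subset[OF sub] fib w by blast
  moreover have "inj_on (\<lambda>y. pp x0 (T y) y) {-\<eta><..<\<eta>}"
  proof (rule inj_onI)
    fix a b assume "pp x0 (T a) a = pp x0 (T b) b"
    then have "pp x0 (T a) a (Suc 0) = pp x0 (T b) b (Suc 0)" by simp
    then show "a = b" by (simp add: pp_1)
  qed
  ultimately have "countable {-\<eta><..<\<eta>}" by (rule countable_image_inj_on)
  then show False using uncountable_open_interval eta by force
qed

lemma mvt_bounds:
  fixes g g' :: "real \<Rightarrow> real"
  assumes der: "\<And>x. a \<le> x \<Longrightarrow> x \<le> b \<Longrightarrow> (g has_real_derivative g' x) (at x)"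
    and bd: "\<And>x. a \<le> x \<Longrightarrow> x \<le> b \<Longrightarrow> m \<le> g' x \<and> g' x \<le> M"
    and ab: "a \<le> b"
  shows "m * (b - a) \<le> g b - g a \<and> g b - g a \<le> M * (b - a)"
proof (cases "a = b")
  case True
  then show ?thesis by simp
next
  case False
  then have "a < b" using ab by simp
  then obtain z where z: "a < z" "z < b" "g b - g a = (b - a) * g' z"
    using MVT2[of a b g g'] der by blast
  have "m \<le> g' z" "g' z \<le> M" using bd[of z] z by auto
  then have "(b - a) * m \<le> (b - a) * g' z" "(b - a) * g' z \<le> (b - a) * M"
    using \<open>a < b\<close> by (simp_all add: mult_left_mono)
  then show ?thesis using z by (simp add: mult.commute)
qed

lemma deriv_ratio_right:
  fixes a :: "real \<Rightarrow> real"
  assumes "(a has_real_derivative D) (at 0)" "a 0 = 0"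
  shows "((\<lambda>t. a t / t) \<longlongrightarrow> D) (at_right 0)"
proof -
  have "((\<lambda>t. (a t - a 0) / (t - 0)) \<longlongrightarrow> D) (at 0)"
    using assms(1) by (simp add: has_field_derivative_iff)
  then have "((\<lambda>t. a t / t) \<longlongrightarrow> D) (at 0)" using assms(2) by simp
  then show ?thesis by (rule tendsto_mono[OF at_le, rotated]) simp
qed

context flowsetup
begin

lemma selection:
  assumes I: "connected I"
    and c1: "continuous_on I \<phi>1" and c2: "continuous_on I \<phi>2"
    and p1: "\<forall>u\<in>I. \<phi>1 u > 0"
    and orb: "\<forall>u\<in>I. \<phi>2 u \<in> Z_orbit \<psi> (\<phi>1 u)"
  shows "\<exists>k::int. \<forall>u\<in>I. \<phi>2 u = c0 (th (\<phi>1 u) + of_int k)"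
proof (cases "I = {}")
  case True
  then show ?thesis by simp
next
  case False
  then obtain u0 where u0: "u0 \<in> I" by blast
  have mem: "\<phi>2 u > 0 \<and> (\<exists>k::int. th (\<phi>2 u) = th (\<phi>1 u) + of_int k)" if "u \<in> I" for u
    using orbit_pos_mem[of "\<phi>1 u" "\<phi>2 u"] p1 orb that by auto
  let ?K = "\<lambda>u. th (\<phi>2 u) - th (\<phi>1 u)"
  have thc: "continuous_on {0<..} th"
    by (rule continuous_at_imp_continuous_on) (auto intro: th_cont)
  have "continuous_on I (\<lambda>u. th (\<phi>2 u))"
    by (rule continuous_on_compose2[OF thc c2]) (use mem in auto)
  moreover have "continuous_on I (\<lambda>u. th (\<phi>1 u))"
    by (rule continuous_on_compose2[OF thc c1]) (use p1 in auto)
  ultimately have Kc: "continuous_on I ?K" by (rule continuous_on_diff)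
  have Kint: "?K u \<in> \<int>" if "u \<in> I" for u
    using mem[OF that] by (auto simp: Ints_def)
  have "?K constant_on I"
  proof (rule continuous_discrete_range_constant[OF I Kc])
    fix x assume x: "x \<in> I"
    show "\<exists>e>0. \<forall>y. y \<in> I \<and> ?K y \<noteq> ?K x \<longrightarrow> e \<le> norm (?K y - ?K x)"
    proof (intro exI[of _ 1] conjI allI impI)
      fix y assume y: "y \<in> I \<and> ?K y \<noteq> ?K x"
      have "?K y - ?K x \<in> \<int>" using Kint x y by (simp add: Ints_diff)
      then obtain z :: int where z: "?K y - ?K x = of_int z" by (auto elim: Ints_cases)
      then have "z \<noteq> 0" using y by auto
      then have "1 \<le> \<bar>of_int z :: real\<bar>" by linarith
      then show "1 \<le> norm (?K y - ?K x)" using z by simp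
    qed simp
  qed
  then obtain C where C: "\<forall>u\<in>I. ?K u = C" unfolding constant_on_def by blast
  obtain k :: int where k: "th (\<phi>2 u0) = th (\<phi>1 u0) + of_int k" using mem[OF u0] by blast
  have "C = of_int k" using C u0 k by force
  show ?thesis
  proof (intro exI[of _ k] ballI)
    fix u assume u: "u \<in> I"
    have "th (\<phi>2 u) = th (\<phi>1 u) + of_int k" using C u \<open>C = of_int k\<close> by force
    then have "c0 (th (\<phi>2 u)) = c0 (th (\<phi>1 u) + of_int k)" by simp
    then show "\<phi>2 u = c0 (th (\<phi>1 u) + of_int k)" using c0_th mem[OF u] by simp
  qed
qed

end

lemma isCont_eps:
  fixes f :: "real \<Rightarrow> real"
  assumes "isCont f a" "e > 0"
  shows "\<exists>d>0. \<forall>x. \<bar>x - a\<bar> < d \<longrightarrow> \<bar>f x - f a\<bar> < e"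
proof -
  obtain s where s: "s > 0" "\<forall>x. x \<noteq> a \<and> norm (x - a) < s \<longrightarrow> norm (f x - f a) < e"
    using assms unfolding isCont_def LIM_eq by blast
  show ?thesis
  proof (intro exI[of _ s] conjI allI impI)
    fix x assume "\<bar>x - a\<bar> < s"
    then show "\<bar>f x - f a\<bar> < e" using s assms(2) by (cases "x = a") auto
  qed fact
qed

context flowsetup
begin

lemma psi_mono: "0 < x \<Longrightarrow> x < y \<Longrightarrow> \<psi> x < \<psi> y"
  using psi_pos[of x] psi_pos[of y] th_mono[of x y] c0_mono[of "th x + 1" "th y + 1"] by simp

lemma sign_bounds:
  fixes g g' :: "real \<Rightarrow> real"
  assumes r: "r > 0"
    and der: "\<And>t. \<bar>t - a\<bar> < r \<Longrightarrow> (g has_real_derivative g' t) (at t)"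
    and gc: "isCont g' a" and nz: "g' a \<noteq> 0"
  obtains \<rho> sg where "\<rho> > 0" "\<rho> \<le> r" "sg * sg = 1" "sg * g' a = \<bar>g' a\<bar>"
    "\<And>t1 t2. t1 \<le> t2 \<Longrightarrow> \<bar>t1 - a\<bar> < \<rho> \<Longrightarrow> \<bar>t2 - a\<bar> < \<rho> \<Longrightarrow>
        \<bar>g' a\<bar> / 2 * (t2 - t1) \<le> sg * (g t2 - g t1) \<and> sg * (g t2 - g t1) \<le> 2 * \<bar>g' a\<bar> * (t2 - t1)"
proof -
  obtain d where d: "d > 0" "\<forall>x. \<bar>x - a\<bar> < d \<longrightarrow> \<bar>g' x - g' a\<bar> < \<bar>g' a\<bar> / 2"
    using isCont_eps[OF gc, of "\<bar>g' a\<bar> / 2"] nz by auto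
  define sg :: real where "sg = (if g' a > 0 then 1 else -1)"
  have sg: "sg * sg = 1" "sg * g' a = \<bar>g' a\<bar>" using nz by (auto simp: sg_def)
  define \<rho> where "\<rho> = min d r"
  have bnd: "\<bar>g' a\<bar> / 2 \<le> sg * g' x \<and> sg * g' x \<le> 2 * \<bar>g' a\<bar>" if "\<bar>x - a\<bar> < \<rho>" for x
  proof -
    have "\<bar>g' x - g' a\<bar> < \<bar>g' a\<bar> / 2" using d that by (simp add: \<rho>_def)
    moreover have "sg * g' x = \<bar>g' a\<bar> + sg * (g' x - g' a)" using sg by (simp add: algebra_simps)
    moreover have "\<bar>sg * (g' x - g' a)\<bar> = \<bar>g' x - g' a\<bar>" using nz by (auto simp: sg_def)
    ultimately show ?thesis by (auto simp: abs_if split: if_split_asm)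
  qed
  have main: "\<bar>g' a\<bar> / 2 * (t2 - t1) \<le> sg * (g t2 - g t1) \<and> sg * (g t2 - g t1) \<le> 2 * \<bar>g' a\<bar> * (t2 - t1)"
    if t: "t1 \<le> t2" "\<bar>t1 - a\<bar> < \<rho>" "\<bar>t2 - a\<bar> < \<rho>" for t1 t2
  proof -
    have inr: "\<bar>x - a\<bar> < \<rho>" if "t1 \<le> x" "x \<le> t2" for x using t that by (auto simp: abs_less_iff)
    have "\<bar>g' a\<bar> / 2 * (t2 - t1) \<le> (\<lambda>t. sg * g t) t2 - (\<lambda>t. sg * g t) t1 \<and>
          (\<lambda>t. sg * g t) t2 - (\<lambda>t. sg * g t) t1 \<le> 2 * \<bar>g' a\<bar> * (t2 - t1)"
    proof (rule mvt_bounds[where g' = "\<lambda>t. sg * g' t"])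
      fix x assume "t1 \<le> x" "x \<le> t2"
      then have x: "\<bar>x - a\<bar> < \<rho>" by (rule inr)
      then show "((\<lambda>t. sg * g t) has_real_derivative sg * g' x) (at x)"
        using der[of x] by (intro DERIV_cmult) (simp add: \<rho>_def)
      show "\<bar>g' a\<bar> / 2 \<le> sg * g' x \<and> sg * g' x \<le> 2 * \<bar>g' a\<bar>" using bnd[OF x] .
    qed fact
    then show ?thesis by (simp add: algebra_simps)
  qed
  show ?thesis
    by (rule that[of \<rho> sg]) (use d r sg main in \<open>auto simp: \<rho>_def\<close>)
qed

end

context flowsetup
begin

lemma core1:
  fixes fh fh' gh gh' :: "real \<Rightarrow> real" and vv rf rg :: real and M :: "(real \<times> real) set"
  assumes rf: "rf > 0" and rg: "rg > 0"
    and fder: "\<And>u. \<bar>u - vv\<bar> < rf \<Longrightarrow> (fh has_real_derivative fh' u) (at u)"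
    and fcont: "isCont fh' vv"
    and gder: "\<And>t. \<bar>t - 0\<bar> < rg \<Longrightarrow> (gh has_real_derivative gh' t) (at t)"
    and gcont: "isCont gh' 0"
    and g0: "gh 0 = vv"
    and A5: "\<And>\<alpha> \<beta> u u'. (\<alpha>, \<beta>) \<in> M \<Longrightarrow> \<bar>u - vv\<bar> < rf \<Longrightarrow> \<bar>u' - vv\<bar> < rf \<Longrightarrow> u' = \<alpha> * u + \<beta>
              \<Longrightarrow> fh u' \<in> Z_orbit \<psi> (fh u)"
    and A6: "\<And>t t'. \<bar>t\<bar> < rg \<Longrightarrow> \<bar>t'\<bar> < rg \<Longrightarrow> Z_orbit \<psi> t = Z_orbit \<psi> t'
              \<Longrightarrow> \<exists>p\<in>M. gh t' = fst p * gh t + snd p"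
    and A7: "\<And>t. \<bar>t\<bar> < rg \<Longrightarrow> \<bar>gh t - vv\<bar> < rf \<Longrightarrow> fh (gh t) \<in> Z_orbit \<psi> t"
    and cM: "countable M"
  shows False
proof -
  have gc0: "isCont gh 0" using gder[of 0] rg DERIV_isCont by auto
  obtain d0 where d0: "d0 > 0" "\<forall>x. \<bar>x - 0\<bar> < d0 \<longrightarrow> \<bar>gh x - gh 0\<bar> < rf"
    using isCont_eps[OF gc0 rf] by blast
  define \<rho>0 where "\<rho>0 = min d0 rg"
  have \<rho>0: "\<rho>0 > 0" "\<rho>0 \<le> rg" using d0 rg by (auto simp: \<rho>0_def)
  have dom0: "\<bar>gh t - vv\<bar> < rf" if "\<bar>t\<bar> < \<rho>0" for t using d0 that g0 by (auto simp: \<rho>0_def)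
  have fv0: "fh vv = 0"
    using A7[of 0] rg rf g0 orbit0 by auto
  let ?a = "\<lambda>t. fh (gh t)"
  have ader: "(?a has_real_derivative fh' vv * gh' 0) (at 0)"
    using DERIV_chain2[of fh "fh' vv" gh 0 "gh' 0"] fder[of vv] gder[of 0] rf rg g0 by auto
  have acont: "continuous_on {0<..<\<rho>0} ?a"
  proof (rule continuous_at_imp_continuous_on, rule ballI)
    fix t assume t: "t \<in> {0<..<\<rho>0}"
    have "(?a has_real_derivative fh' (gh t) * gh' t) (at t)"
      using DERIV_chain2[of fh "fh' (gh t)" gh t "gh' t"] fder[of "gh t"] gder[of t] dom0[of t] t \<rho>0
      by auto
    then show "isCont ?a t" by (rule DERIV_isCont)
  qed
  obtain k :: int where k: "\<forall>t\<in>{0<..<\<rho>0}. ?a t = c0 (th t + of_int k)"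
  proof -
    have "\<exists>k::int. \<forall>t\<in>{0<..<\<rho>0}. ?a t = c0 (th ((\<lambda>t. t) t) + of_int k)"
    proof (rule selection)
      show "connected {0<..<\<rho>0}" by simp
      show "continuous_on {0<..<\<rho>0} (\<lambda>t. t)" by (rule continuous_on_id)
      show "continuous_on {0<..<\<rho>0} ?a" by (rule acont)
      show "\<forall>t\<in>{0<..<\<rho>0}. t > 0" by simp
      show "\<forall>t\<in>{0<..<\<rho>0}. ?a t \<in> Z_orbit \<psi> t"
        using A7 dom0 \<rho>0 by auto
    qed
    then show ?thesis using that by auto
  qed
  have lim1: "((\<lambda>t. ?a t / t) \<longlongrightarrow> fh' vv * gh' 0) (at_right 0)"
    by (rule deriv_ratio_right[OF ader]) (simp add: g0 fv0)
  have lim2: "((\<lambda>t. ?a t / t) \<longlongrightarrow> 1) (at_right 0)"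
  proof -
    have ev: "eventually (\<lambda>t. c0 (th t + of_int k) / t = ?a t / t) (at_right (0::real))"
      unfolding eventually_at_right_field using k \<rho>0 by (intro exI[of _ \<rho>0]) auto
    show ?thesis using tendsto_cong[OF ev] ratio_lim[of "of_int k"] by simp
  qed
  have prod1: "fh' vv * gh' 0 = 1"
    using tendsto_unique[OF trivial_limit_at_right_real lim1 lim2] .
  then have nzf: "fh' vv \<noteq> 0" and nzg: "gh' 0 \<noteq> 0" by auto
  obtain \<rho>1 sg where \<rho>1: "\<rho>1 > 0" "\<rho>1 \<le> rg" and sg: "sg * sg = 1" "sg * gh' 0 = \<bar>gh' 0\<bar>"
    and gb: "\<And>t1 t2. t1 \<le> t2 \<Longrightarrow> \<bar>t1 - 0\<bar> < \<rho>1 \<Longrightarrow> \<bar>t2 - 0\<bar> < \<rho>1 \<Longrightarrow>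
        \<bar>gh' 0\<bar> / 2 * (t2 - t1) \<le> sg * (gh t2 - gh t1) \<and> sg * (gh t2 - gh t1) \<le> 2 * \<bar>gh' 0\<bar> * (t2 - t1)"
    using sign_bounds[OF rg gder gcont nzg] by blast
  obtain \<rho>2 sf where \<rho>2: "\<rho>2 > 0" "\<rho>2 \<le> rf" and sf: "sf * sf = 1" "sf * fh' vv = \<bar>fh' vv\<bar>"
    and fb0: "\<And>t1 t2. t1 \<le> t2 \<Longrightarrow> \<bar>t1 - vv\<bar> < \<rho>2 \<Longrightarrow> \<bar>t2 - vv\<bar> < \<rho>2 \<Longrightarrow>
        \<bar>fh' vv\<bar> / 2 * (t2 - t1) \<le> sf * (fh t2 - fh t1) \<and> sf * (fh t2 - fh t1) \<le> 2 * \<bar>fh' vv\<bar> * (t2 - t1)"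
    using sign_bounds[OF rf fder fcont nzf] by blast
  have fb: "\<bar>fh' vv\<bar> / 2 * (t2 - t1) \<le> sf * (fh t2 - fh t1)"
    if "t1 \<le> t2" "\<bar>t1 - vv\<bar> < \<rho>2" "\<bar>t2 - vv\<bar> < \<rho>2" for t1 t2
    using fb0[OF that] by blast
  have sgv: "sg = 1 \<or> sg = -1" using sg(1) by (simp add: square_eq_1_iff)
  have sfv: "sf = 1 \<or> sf = -1" using sf(1) by (simp add: square_eq_1_iff)
  define m1 where "m1 = \<bar>gh' 0\<bar> / 2"
  define M1 where "M1 = 2 * \<bar>gh' 0\<bar>"
  have m1: "m1 > 0" "M1 > 0" using nzg by (auto simp: m1_def M1_def)
  have finj: "u1 = u2" if "\<bar>u1 - vv\<bar> < \<rho>2" "\<bar>u2 - vv\<bar> < \<rho>2" "fh u1 = fh u2" for u1 u2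
  proof (rule ccontr)
    assume ne: "u1 \<noteq> u2"
    have pos: "\<bar>fh' vv\<bar> / 2 > 0" using nzf by simp
    show False
    proof (cases "u1 < u2")
      case True
      then have "\<bar>fh' vv\<bar> / 2 * (u2 - u1) \<le> sf * (fh u2 - fh u1)" using fb[of u1 u2] that by simp
      moreover have "\<bar>fh' vv\<bar> / 2 * (u2 - u1) > 0" using pos True by simp
      ultimately show False using that by simp
    next
      case False
      then have "u2 < u1" using ne by simp
      then have "\<bar>fh' vv\<bar> / 2 * (u1 - u2) \<le> sf * (fh u1 - fh u2)" using fb[of u2 u1] that by simp
      moreover have "\<bar>fh' vv\<bar> / 2 * (u1 - u2) > 0" using pos \<open>u2 < u1\<close> by simp
      ultimately show False using that by simp
    qed
  qed
  \<comment> \<open>Step 4: discreteness of the orbit of vv\<close>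
  have disc: "\<alpha> * vv + \<beta> = vv" if "(\<alpha>, \<beta>) \<in> M" "\<bar>\<alpha> * vv + \<beta> - vv\<bar> < \<rho>2" for \<alpha> \<beta>
  proof -
    have "fh (\<alpha> * vv + \<beta>) \<in> Z_orbit \<psi> (fh vv)"
      using A5[OF that(1), of vv "\<alpha> * vv + \<beta>"] that(2) \<rho>2 rf by auto
    then have "fh (\<alpha> * vv + \<beta>) = fh vv" using fv0 orbit0 by simp
    then show ?thesis using finj[of "\<alpha> * vv + \<beta>" vv] that(2) \<rho>2 by simp
  qed
  have gclose: "\<bar>gh s - vv\<bar> \<le> M1 * s" if "0 \<le> s" "s < \<rho>1" for s
  proof -
    have "m1 * (s - 0) \<le> sg * (gh s - gh 0) \<and> sg * (gh s - gh 0) \<le> M1 * (s - 0)"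
      using gb[of 0 s] that \<rho>1 by (simp add: m1_def M1_def)
    moreover have "\<bar>sg * (gh s - gh 0)\<bar> = \<bar>gh s - gh 0\<bar>"
      using sgv by auto
    moreover have "sg * (gh s - gh 0) \<le> \<bar>sg * (gh s - gh 0)\<bar>" "- (sg * (gh s - gh 0)) \<le> \<bar>sg * (gh s - gh 0)\<bar>" by auto
    moreover have "m1 * s \<ge> 0" using m1 that by simp
    ultimately show ?thesis using g0 sgv by auto
  qed
  \<comment> \<open>Step 5: a nontrivial element fixing vv\<close>
  obtain \<delta>\<psi> B where dB: "\<delta>\<psi> > 0" "B > 0"
    "\<forall>t1 t2. 0 < t1 \<and> t1 < t2 \<and> t2 < \<delta>\<psi> \<longrightarrow> \<psi> t2 - \<psi> t1 \<le> B * (t2 - t1)"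
    using psi_lip by blast
  define \<Lambda> where "\<Lambda> = M1 * B / m1"
  have \<Lambda>: "\<Lambda> > 0" using m1 dB by (simp add: \<Lambda>_def)
  obtain \<delta>a where da: "\<delta>a > 0" "\<forall>t. 0 < t \<and> t < \<delta>a \<longrightarrow> \<psi> t < min \<rho>1 (\<rho>2 / (2 * M1))"
    using psi_small[of "min \<rho>1 (\<rho>2 / (2 * M1))"] \<rho>1 \<rho>2 m1 by auto
  define \<delta> where "\<delta> = min (min \<rho>1 \<delta>\<psi>) (min \<delta>a (\<rho>2 / (2 * (\<Lambda> * M1 + 1))))"
  have "\<Lambda> * M1 > 0" using \<Lambda> m1 by simp
  then have cpos: "2 * (\<Lambda> * M1 + 1) > 0" by simp
  then have "\<rho>2 / (2 * (\<Lambda> * M1 + 1)) > 0" using \<rho>2 by simp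
  then have \<delta>: "\<delta> > 0" using \<rho>1 dB da unfolding \<delta>_def by simp
  have tprops: "t < \<rho>1" "\<psi> t < \<rho>1" "t < \<psi> t" "M1 * \<psi> t < \<rho>2 / 2" "\<Lambda> * M1 * t < \<rho>2 / 2"
    if "0 < t" "t < \<delta>" for t
  proof -
    show "t < \<rho>1" using that by (simp add: \<delta>_def)
    have "\<psi> t < min \<rho>1 (\<rho>2 / (2 * M1))" using da that by (simp add: \<delta>_def)
    then show "\<psi> t < \<rho>1" "M1 * \<psi> t < \<rho>2 / 2" using m1 by (auto simp: field_simps)
    show "t < \<psi> t" using psi_gt that by simp
    have "t < \<rho>2 / (2 * (\<Lambda> * M1 + 1))" using that by (simp add: \<delta>_def)
    then have "t * (2 * (\<Lambda> * M1 + 1)) < \<rho>2" using cpos by (simp only: pos_less_divide_eq)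
    then have "2 * (\<Lambda> * M1 * t) < \<rho>2" using that by (simp add: algebra_simps)
    then show "\<Lambda> * M1 * t < \<rho>2 / 2" by simp
  qed
  define C where "C t = (SOME p. p \<in> M \<and> gh (\<psi> t) = fst p * gh t + snd p)" for t
  have C: "C t \<in> M \<and> gh (\<psi> t) = fst (C t) * gh t + snd (C t)" if "0 < t" "t < \<delta>" for t
  proof -
    have "\<bar>t\<bar> < rg" "\<bar>\<psi> t\<bar> < rg" using tprops[OF that] \<rho>1 that by auto
    moreover have "Z_orbit \<psi> t = Z_orbit \<psi> (\<psi> t)" using orbit_psi that by simp
    ultimately have "\<exists>p\<in>M. gh (\<psi> t) = fst p * gh t + snd p" by (rule A6)
    then show ?thesis unfolding C_def by (rule someI2_bex) blast
  qed
  have "\<not> inj_on C {0<..<\<delta>}"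
  proof
    assume inj: "inj_on C {0<..<\<delta>}"
    have "C ` {0<..<\<delta>} \<subseteq> M" using C by auto
    then have "countable (C ` {0<..<\<delta>})" using cM countable_subset by blast
    then have "countable {0<..<\<delta>}" using inj countable_image_inj_on by blast
    then show False using uncountable_open_interval \<delta> by blast
  qed
  then obtain x y where xy: "x \<in> {0<..<\<delta>}" "y \<in> {0<..<\<delta>}" "C x = C y" "x \<noteq> y"
    unfolding inj_on_def by blast
  obtain ta tb where tab: "0 < ta" "ta < tb" "tb < \<delta>" "C ta = C tb"
  proof (cases "x < y")
    case True
    then show ?thesis using that[of x y] xy by auto
  next
    case False
    then have "y < x" using xy by auto
    then show ?thesis using that[of y x] xy by auto
  qed
  define \<alpha> where "\<alpha> = fst (C ta)"
  define \<beta> where "\<beta> = snd (C ta)"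
  have ab: "(\<alpha>, \<beta>) \<in> M" using C[of ta] tab by (simp add: \<alpha>_def \<beta>_def)
  have ea: "gh (\<psi> ta) = \<alpha> * gh ta + \<beta>" using C[of ta] tab by (simp add: \<alpha>_def \<beta>_def)
  have eb: "gh (\<psi> tb) = \<alpha> * gh tb + \<beta>" using C[of tb] tab by (simp add: \<alpha>_def \<beta>_def)
  have tbd: "ta < \<delta>" "tb > 0" using tab by auto
  note pa = tprops[OF tab(1) tbd(1)] and pb = tprops[OF tbd(2) tab(3)]
  have psiab: "\<psi> ta < \<psi> tb" using psi_mono tab by simp
  have D1: "m1 * (tb - ta) \<le> sg * (gh tb - gh ta)"
    using gb[of ta tb] tab pa pb by (simp add: m1_def)
  have D2: "sg * (gh (\<psi> tb) - gh (\<psi> ta)) \<le> M1 * (\<psi> tb - \<psi> ta)"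
    using gb[of "\<psi> ta" "\<psi> tb"] psiab pa pb tab by (simp add: M1_def)
  have D3: "\<psi> tb - \<psi> ta \<le> B * (tb - ta)"
    using dB(3) tab by (auto simp: \<delta>_def)
  have rel: "sg * (gh (\<psi> tb) - gh (\<psi> ta)) = \<alpha> * (sg * (gh tb - gh ta))"
    using ea eb by (simp add: algebra_simps)
  have "m1 * (tb - ta) > 0" using m1 tab by simp
  then have Dpos: "sg * (gh tb - gh ta) > 0" using D1 by linarith
  have D4a: "m1 * (\<psi> tb - \<psi> ta) \<le> sg * (gh (\<psi> tb) - gh (\<psi> ta))"
    using gb[of "\<psi> ta" "\<psi> tb"] psiab pa pb tab by (simp add: m1_def)
  have "m1 * (\<psi> tb - \<psi> ta) > 0" using m1 psiab by simp
  then have D4: "0 < sg * (gh (\<psi> tb) - gh (\<psi> ta))" using D4a by linarith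
  have "0 < \<alpha> * (sg * (gh tb - gh ta))" using D4 rel by simp
  then have alpha_pos: "\<alpha> > 0" using Dpos by (simp add: zero_less_mult_iff)
  have alpha_le: "\<alpha> \<le> \<Lambda>"
  proof -
    have "\<alpha> * (m1 * (tb - ta)) \<le> \<alpha> * (sg * (gh tb - gh ta))"
      using D1 alpha_pos by (simp add: mult_left_mono)
    also have "\<dots> \<le> M1 * (B * (tb - ta))"
    proof -
      have "M1 * (\<psi> tb - \<psi> ta) \<le> M1 * (B * (tb - ta))" using D3 m1 by (simp add: mult_left_mono)
      then show ?thesis using rel D2 by linarith
    qed
    finally have "\<alpha> * m1 * (tb - ta) \<le> (M1 * B) * (tb - ta)" by (simp add: algebra_simps)
    then have "\<alpha> * m1 \<le> M1 * B" using tab by simp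
    then show ?thesis using m1 by (simp add: \<Lambda>_def field_simps)
  qed
  have fix0: "\<alpha> * vv + \<beta> = vv"
  proof (rule disc[OF ab])
    have "\<alpha> * vv + \<beta> - vv = (gh (\<psi> ta) - vv) - \<alpha> * (gh ta - vv)" using ea by (simp add: algebra_simps)
    then have "\<bar>\<alpha> * vv + \<beta> - vv\<bar> = \<bar>(gh (\<psi> ta) - vv) - \<alpha> * (gh ta - vv)\<bar>" by simp
    also have "\<dots> \<le> \<bar>gh (\<psi> ta) - vv\<bar> + \<bar>\<alpha> * (gh ta - vv)\<bar>" by (rule abs_triangle_ineq4)
    also have "\<dots> = \<bar>gh (\<psi> ta) - vv\<bar> + \<alpha> * \<bar>gh ta - vv\<bar>" using alpha_pos by (simp add: abs_mult)
    also have "\<dots> \<le> M1 * \<psi> ta + \<Lambda> * (M1 * ta)"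
    proof (rule add_mono)
      show "\<bar>gh (\<psi> ta) - vv\<bar> \<le> M1 * \<psi> ta" using gclose[of "\<psi> ta"] pa tab by simp
      have "\<bar>gh ta - vv\<bar> \<le> M1 * ta" using gclose[of ta] pa tab by simp
      then show "\<alpha> * \<bar>gh ta - vv\<bar> \<le> \<Lambda> * (M1 * ta)"
        using alpha_le alpha_pos by (intro mult_mono) auto
    qed
    also have "\<dots> < \<rho>2" using pa by (simp add: algebra_simps)
    finally show "\<bar>\<alpha> * vv + \<beta> - vv\<bar> < \<rho>2" .
  qed
  have alpha_ne: "\<alpha> \<noteq> 1"
  proof
    assume "\<alpha> = 1"
    then have "\<beta> = 0" using fix0 by simp
    then have "gh (\<psi> ta) = gh ta" using ea \<open>\<alpha> = 1\<close> by simp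
    moreover have "m1 * (\<psi> ta - ta) \<le> sg * (gh (\<psi> ta) - gh ta)"
      using gb[of ta "\<psi> ta"] pa tab by (simp add: m1_def)
    moreover have "m1 * (\<psi> ta - ta) > 0" using m1 pa by simp
    ultimately show False by simp
  qed
  \<comment> \<open>Step 6: contradiction via the one-sided derivative at vv\<close>
  define \<rho>3 where "\<rho>3 = \<rho>2 / (\<alpha> + 1)"
  have \<rho>3: "\<rho>3 > 0" using \<rho>2 alpha_pos by (simp add: \<rho>3_def)
  have inb: "\<bar>vv + sf * w - vv\<bar> < \<rho>2" "\<bar>vv + sf * (\<alpha> * w) - vv\<bar> < \<rho>2" if "0 \<le> w" "w < \<rho>3" for w
  proof -
    have "w * (\<alpha> + 1) < \<rho>2" using that alpha_pos by (simp add: \<rho>3_def field_simps)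
    moreover have "\<alpha> * w \<ge> 0" using that alpha_pos by simp
    ultimately have "w < \<rho>2" "\<alpha> * w < \<rho>2" using that by (auto simp: algebra_simps)
    then show "\<bar>vv + sf * w - vv\<bar> < \<rho>2" "\<bar>vv + sf * (\<alpha> * w) - vv\<bar> < \<rho>2"
      using sfv that alpha_pos by auto
  qed
  let ?p1 = "\<lambda>w. fh (vv + sf * w)"
  let ?p2 = "\<lambda>w. fh (vv + sf * (\<alpha> * w))"
  have p1pos: "?p1 w > 0" if "0 < w" "w < \<rho>3" for w
  proof -
    have "\<bar>fh' vv\<bar> / 2 > 0" using nzf by simp
    from sfv show ?thesis
    proof
      assume s1: "sf = 1"
      have "\<bar>fh' vv\<bar> / 2 * ((vv + w) - vv) \<le> sf * (fh (vv + w) - fh vv)"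
        using fb[of vv "vv + w"] inb[of w] that \<rho>2 s1 by auto
      moreover have "\<bar>fh' vv\<bar> / 2 * w > 0" using \<open>\<bar>fh' vv\<bar> / 2 > 0\<close> that by simp
      ultimately show ?thesis using s1 fv0 by simp
    next
      assume s1: "sf = -1"
      have "\<bar>fh' vv\<bar> / 2 * (vv - (vv - w)) \<le> sf * (fh vv - fh (vv - w))"
        using fb[of "vv - w" vv] inb[of w] that \<rho>2 s1 by auto
      moreover have "\<bar>fh' vv\<bar> / 2 * w > 0" using \<open>\<bar>fh' vv\<bar> / 2 > 0\<close> that by simp
      ultimately show ?thesis using s1 fv0 by simp
    qed
  qed
  have p1der: "(?p1 has_real_derivative fh' (vv + sf * w) * sf) (at w)" if "\<bar>w\<bar> < \<rho>3" for w
  proof -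
    have "\<bar>vv + sf * w - vv\<bar> < \<rho>2" using inb[of "\<bar>w\<bar>"] that sfv by auto
    then have "(fh has_real_derivative fh' (vv + sf * w)) (at (vv + sf * w))" using fder \<rho>2 by auto
    moreover have "((\<lambda>w. vv + sf * w) has_real_derivative sf) (at w)"
      by (auto intro!: derivative_eq_intros)
    ultimately show ?thesis by (rule DERIV_chain2)
  qed
  have p2der: "(?p2 has_real_derivative fh' (vv + sf * (\<alpha> * w)) * (sf * \<alpha>)) (at w)" if "\<bar>w\<bar> < \<rho>3" for w
  proof -
    have "\<bar>vv + sf * (\<alpha> * w) - vv\<bar> < \<rho>2" using inb[of "\<bar>w\<bar>"] that sfv alpha_pos by (auto simp: abs_mult)
    then have "(fh has_real_derivative fh' (vv + sf * (\<alpha> * w))) (at (vv + sf * (\<alpha> * w)))" using fder \<rho>2 by auto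
    moreover have "((\<lambda>w. vv + sf * (\<alpha> * w)) has_real_derivative sf * \<alpha>) (at w)"
      by (auto intro!: derivative_eq_intros)
    ultimately show ?thesis by (rule DERIV_chain2)
  qed
  have p1c: "continuous_on {0<..<\<rho>3} ?p1"
  proof (rule continuous_at_imp_continuous_on, rule ballI)
    fix w assume "w \<in> {0<..<\<rho>3}"
    then have "\<bar>w\<bar> < \<rho>3" by auto
    then show "isCont ?p1 w" by (rule DERIV_isCont[OF p1der])
  qed
  have p2c: "continuous_on {0<..<\<rho>3} ?p2"
  proof (rule continuous_at_imp_continuous_on, rule ballI)
    fix w assume "w \<in> {0<..<\<rho>3}"
    then have "\<bar>w\<bar> < \<rho>3" by auto
    then show "isCont ?p2 w" by (rule DERIV_isCont[OF p2der])
  qed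
  obtain j :: int where j: "\<forall>w\<in>{0<..<\<rho>3}. ?p2 w = c0 (th (?p1 w) + of_int j)"
  proof -
    have "\<exists>j::int. \<forall>w\<in>{0<..<\<rho>3}. ?p2 w = c0 (th (?p1 w) + of_int j)"
    proof (rule selection)
      show "connected {0<..<\<rho>3}" by simp
      show "continuous_on {0<..<\<rho>3} ?p1" by (rule p1c)
      show "continuous_on {0<..<\<rho>3} ?p2" by (rule p2c)
      show "\<forall>w\<in>{0<..<\<rho>3}. ?p1 w > 0" using p1pos by auto
      show "\<forall>w\<in>{0<..<\<rho>3}. ?p2 w \<in> Z_orbit \<psi> (?p1 w)"
      proof
        fix w assume w: "w \<in> {0<..<\<rho>3}"
        have "vv + sf * (\<alpha> * w) = \<alpha> * (vv + sf * w) + \<beta>" using fix0 by (simp add: algebra_simps)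
        then show "?p2 w \<in> Z_orbit \<psi> (?p1 w)"
          using A5[OF ab, of "vv + sf * w" "vv + sf * (\<alpha> * w)"] inb[of w] w \<rho>2 by auto
      qed
    qed
    then show ?thesis using that by auto
  qed
  have L1: "((\<lambda>w. ?p1 w / w) \<longlongrightarrow> fh' vv * sf) (at_right 0)"
    using deriv_ratio_right[of ?p1 "fh' vv * sf"] p1der[of 0] \<rho>3 fv0 by simp
  have L2: "((\<lambda>w. ?p2 w / w) \<longlongrightarrow> fh' vv * (sf * \<alpha>)) (at_right 0)"
    using deriv_ratio_right[of ?p2 "fh' vv * (sf * \<alpha>)"] p2der[of 0] \<rho>3 fv0 by simp
  have F1: "filterlim ?p1 (at_right 0) (at_right 0)"
    unfolding filterlim_at
  proof
    show "eventually (\<lambda>w. ?p1 w \<in> {0<..} \<and> ?p1 w \<noteq> 0) (at_right (0::real))"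
      unfolding eventually_at_right_field
    proof (rule exI[of _ \<rho>3], rule conjI, fact, intro allI impI)
      fix w :: real assume "0 < w" "w < \<rho>3"
      then have "?p1 w > 0" by (rule p1pos)
      then show "?p1 w \<in> {0<..} \<and> ?p1 w \<noteq> 0" by simp
    qed
    have "isCont ?p1 0" using p1der[of 0] \<rho>3 DERIV_isCont by auto
    then have "(?p1 \<longlongrightarrow> ?p1 0) (at 0)" by (simp add: isCont_def)
    then have "(?p1 \<longlongrightarrow> 0) (at 0)" using fv0 by simp
    then show "(?p1 \<longlongrightarrow> 0) (at_right 0)" by (rule tendsto_mono[OF at_le, rotated]) simp
  qed
  have L3: "((\<lambda>w. c0 (th (?p1 w) + of_int j) / ?p1 w) \<longlongrightarrow> 1) (at_right 0)"
    using filterlim_compose[OF ratio_lim[of "of_int j"] F1] .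
  have L4: "((\<lambda>w. (c0 (th (?p1 w) + of_int j) / ?p1 w) * (?p1 w / w)) \<longlongrightarrow> 1 * (fh' vv * sf)) (at_right 0)"
    by (rule tendsto_mult[OF L3 L1])
  have ev: "eventually (\<lambda>w. (c0 (th (?p1 w) + of_int j) / ?p1 w) * (?p1 w / w) = ?p2 w / w) (at_right (0::real))"
    unfolding eventually_at_right_field
  proof (intro exI[of _ \<rho>3] conjI allI impI)
    fix w :: real assume w: "0 < w" "w < \<rho>3"
    then have "?p1 w \<noteq> 0" using p1pos by (metis less_irrefl)
    then show "(c0 (th (?p1 w) + of_int j) / ?p1 w) * (?p1 w / w) = ?p2 w / w"
      using j w by simp
  qed fact
  have L5: "((\<lambda>w. ?p2 w / w) \<longlongrightarrow> 1 * (fh' vv * sf)) (at_right 0)"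
    using tendsto_cong[OF ev] L4 by simp
  have "fh' vv * (sf * \<alpha>) = 1 * (fh' vv * sf)"
    using tendsto_unique[OF trivial_limit_at_right_real L2 L5] .
  moreover have "fh' vv * sf \<noteq> 0" using nzf sfv by auto
  ultimately have "\<alpha> = 1" by (simp add: algebra_simps)
  then show False using alpha_ne by simp
qed

end

lemma open_Rn_full: "open_Rn n (Rn n)"
  unfolding open_Rn_def by (auto intro: exI[of _ 1])

lemma Rn0: "x \<in> Rn 0 \<Longrightarrow> x = (\<lambda>_. 0)"
  unfolding Rn_def by auto

lemma aff_id_Rn: "x \<in> Rn n \<Longrightarrow> aff_id n x = x"
proof -
  assume x: "x \<in> Rn n"
  have "aff_id n x i = x i" for i
  proof (cases "i < n")
    case True
    have "(\<Sum>j<n. (if i = j then 1 else 0) * x j) = (\<Sum>j<n. if j = i then x i else 0)"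
      by (rule sum.cong) auto
    also have "\<dots> = x i" using True by simp
    finally show ?thesis using True unfolding aff_id_def aff_map_def by simp
  next
    case False
    then show ?thesis using x unfolding aff_id_def aff_map_def Rn_def by simp
  qed
  then show ?thesis by blast
qed

lemma orbit_mem_self: "subgroup_Aff n \<Gamma> \<Longrightarrow> x \<in> Rn n \<Longrightarrow> x \<in> orbit_of \<Gamma> x"
  unfolding orbit_of_def subgroup_Aff_def using aff_id_Rn by (metis image_eqI)

lemma orbit_eq_mem:
  "subgroup_Aff n \<Gamma> \<Longrightarrow> y \<in> Rn n \<Longrightarrow> orbit_of \<Gamma> x = orbit_of \<Gamma> y \<Longrightarrow> \<exists>\<gamma>\<in>\<Gamma>. y = \<gamma> x"
  using orbit_mem_self[of n \<Gamma> y] unfolding orbit_of_def by auto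

lemma orbit_of_act:
  assumes G: "subgroup_Aff n \<Gamma>" and g: "\<gamma> \<in> \<Gamma>" and x: "x \<in> Rn n"
  shows "orbit_of \<Gamma> (\<gamma> x) = orbit_of \<Gamma> x"
proof
  show "orbit_of \<Gamma> (\<gamma> x) \<subseteq> orbit_of \<Gamma> x"
  proof
    fix z assume "z \<in> orbit_of \<Gamma> (\<gamma> x)"
    then obtain g' where "g' \<in> \<Gamma>" "z = g' (\<gamma> x)" unfolding orbit_of_def by auto
    moreover have "g' \<circ> \<gamma> \<in> \<Gamma>" using G g \<open>g' \<in> \<Gamma>\<close> unfolding subgroup_Aff_def by blast
    ultimately show "z \<in> orbit_of \<Gamma> x" unfolding orbit_of_def by (metis comp_apply image_eqI)
  qed
next
  show "orbit_of \<Gamma> x \<subseteq> orbit_of \<Gamma> (\<gamma> x)"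
  proof
    fix z assume "z \<in> orbit_of \<Gamma> x"
    then obtain g' where g': "g' \<in> \<Gamma>" "z = g' x" unfolding orbit_of_def by auto
    obtain k where k: "k \<in> \<Gamma>" "k \<circ> \<gamma> = aff_id n" using G g unfolding subgroup_Aff_def by blast
    have "k (\<gamma> x) = x" using k aff_id_Rn[OF x] by (metis comp_apply)
    then have "z = (g' \<circ> k) (\<gamma> x)" using g' by simp
    moreover have "g' \<circ> k \<in> \<Gamma>" using G g' k unfolding subgroup_Aff_def by blast
    ultimately show "z \<in> orbit_of \<Gamma> (\<gamma> x)" unfolding orbit_of_def by blast
  qed
qed

lemma aff1_coef: "\<gamma> \<in> Aff 1 \<Longrightarrow> \<exists>p. \<forall>u. \<gamma> (emb1 u) = emb1 (fst p * u + snd p)"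
proof -
  assume "\<gamma> \<in> Aff 1"
  then obtain A b where g: "\<gamma> = aff_map 1 A b" unfolding Aff_def by blast
  have "\<gamma> (emb1 u) = emb1 (A 0 0 * u + b 0)" for u
    unfolding g aff_map_def emb1_def by (auto simp: fun_eq_iff)
  then show ?thesis by (intro exI[of _ "(A 0 0, b 0)"]) simp
qed

lemma S_plots: "dplots (quotient_space real_space proj) n U p \<longleftrightarrow> open_Rn n U \<and>
   (\<forall>r\<in>U. \<exists>W. open_Rn n W \<and> r \<in> W \<and> W \<subseteq> U \<and>
      (\<exists>q. (open_Rn n W \<and> smooth_scalar n W q) \<and> (\<forall>s\<in>W. p s = proj (q s))))"
  by (simp add: quotient_space_def real_space_def)

lemma S_carrier: "dcarrier (quotient_space real_space proj) = range proj"
  by (simp add: quotient_space_def real_space_def)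

lemma Y_plots: "dplots (orbit_space n V \<Gamma>) m U p \<longleftrightarrow> open_Rn m U \<and>
   (\<forall>r\<in>U. \<exists>W. open_Rn m W \<and> r \<in> W \<and> W \<subseteq> U \<and>
      (\<exists>q. (open_Rn m W \<and> smooth_Rn m n W q \<and> q ` W \<subseteq> V) \<and> (\<forall>s\<in>W. p s = orbit_of \<Gamma> (q s))))"
  by (simp add: orbit_space_def quotient_space_def open_subset_space_def)

lemma Y_carrier: "dcarrier (orbit_space n V \<Gamma>) = orbit_of \<Gamma> ` V"
  by (simp add: orbit_space_def quotient_space_def open_subset_space_def)

lemma Y_orbit_plot: "open_Rn n V \<Longrightarrow> dplots (orbit_space n V \<Gamma>) n V (orbit_of \<Gamma>)"
  unfolding Y_plots using smooth_id by (auto intro!: exI[of _ V] exI[of _ "\<lambda>x. x"])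

lemma sub_plots: "dplots (subspace S A) n U p \<longleftrightarrow> dplots S n U p \<and> p ` U \<subseteq> A"
  by (simp add: subspace_def)

lemma sub_carrier: "dcarrier (subspace S A) = A"
  by (simp add: subspace_def)

lemma open_ball_real:
  fixes A :: "real set" and a :: real
  assumes "open A" "a \<in> A"
  obtains r where "r > 0" "\<And>t. \<bar>t - a\<bar> < r \<Longrightarrow> t \<in> A"
proof -
  obtain r where "r > 0" "\<forall>y. dist y a < r \<longrightarrow> y \<in> A" using assms unfolding open_dist by blast
  then show thesis using that[of r] by (auto simp: dist_real_def)
qed

context flowsetup
begin

theorem not_quasifold: "\<not> quasifold (quotient_space real_space (Z_orbit \<psi>))"
proof
  let ?S = "quotient_space real_space (Z_orbit \<psi>)"
  assume "quasifold ?S"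
  then obtain n where qd: "quasifold_dim n ?S" unfolding quasifold_def by blast
  have "Z_orbit \<psi> 0 \<in> dcarrier ?S" by (simp add: S_carrier)
  then obtain U \<Gamma> V where DU: "D_open ?S U" and U0: "Z_orbit \<psi> 0 \<in> U" and cG: "countable \<Gamma>"
    and sG: "subgroup_Aff n \<Gamma>" and oV: "open_Rn n V" and inv: "\<forall>g\<in>\<Gamma>. g ` V \<subseteq> V"
    and dm: "diffeomorphic (subspace ?S U) (orbit_space n V \<Gamma>)"
    using qd unfolding quasifold_dim_def by blast
  let ?Y = "orbit_space n V \<Gamma>"
  obtain F G where Fs: "dsmooth (subspace ?S U) ?Y F" and Gs: "dsmooth ?Y (subspace ?S U) G"
    and GF: "\<forall>x\<in>U. G (F x) = x" and FG: "\<forall>y\<in>orbit_of \<Gamma> ` V. F (G y) = y"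
    using dm unfolding diffeomorphic_def by (auto simp: sub_carrier Y_carrier)
  have FU: "F x \<in> orbit_of \<Gamma> ` V" if "x \<in> U" for x
    using Fs that unfolding dsmooth_def by (auto simp: sub_carrier Y_carrier)
  have Fplot: "dplots ?Y m W (F \<circ> p)" if "dplots (subspace ?S U) m W p" for m W p
    using Fs that unfolding dsmooth_def by blast
  have Gplot: "dplots (subspace ?S U) m W (G \<circ> p)" if "dplots ?Y m W p" for m W p
    using Gs that unfolding dsmooth_def by blast
  let ?P = "\<lambda>x::nat \<Rightarrow> real. Z_orbit \<psi> (x 0)"
  have Pplot: "dplots ?S 1 W ?P" if "open_Rn 1 W" for W
    unfolding S_plots using that smooth_coord[OF that, of 0]
    by (auto intro!: exI[of _ W] exI[of _ "\<lambda>x. x 0"])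
  have oW0: "open_Rn 1 {r \<in> Rn 1. ?P r \<in> U}"
    using DU Pplot[OF open_Rn_full] unfolding D_open_def by blast
  have e0: "emb1 0 \<in> {r \<in> Rn 1. ?P r \<in> U}" using U0 emb1_Rn by simp
  have P0plot: "dplots (subspace ?S U) 1 {r \<in> Rn 1. ?P r \<in> U} ?P"
    unfolding sub_plots using Pplot[OF oW0] by auto
  consider "n = 0" | "n = 1" | "2 \<le> n" by linarith
  then show False
  proof cases
    case 1
    obtain e where e: "e > 0" "\<forall>y\<in>Rn 1. dist_Rn 1 (emb1 0) y < e \<longrightarrow> y \<in> {r \<in> Rn 1. ?P r \<in> U}"
      using oW0 e0 unfolding open_Rn_def by blast
    have "dist_Rn 1 (emb1 0) (emb1 (e/2)) < e" using e dist_emb1[of 0 "e/2"] by simp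
    then have Ut: "Z_orbit \<psi> (e/2) \<in> U" using e emb1_Rn by fastforce
    have V0: "\<forall>v\<in>V. v = (\<lambda>_. 0)" using oV 1 open_Rn_sub Rn0 by blast
    obtain x1 where x1: "x1 \<in> V" "F (Z_orbit \<psi> 0) = orbit_of \<Gamma> x1" using FU[OF U0] by blast
    obtain x2 where x2: "x2 \<in> V" "F (Z_orbit \<psi> (e/2)) = orbit_of \<Gamma> x2" using FU[OF Ut] by blast
    have "x1 = x2" using V0 x1 x2 by metis
    then have "F (Z_orbit \<psi> 0) = F (Z_orbit \<psi> (e/2))" using x1 x2 by simp
    then have "Z_orbit \<psi> 0 = Z_orbit \<psi> (e/2)" using GF U0 Ut by metis
    then have "e/2 \<in> Z_orbit \<psi> 0" using orbit_self[of "e/2"] by simp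
    then show False using orbit0 e by simp
  next
    case 3
    obtain v where v: "v \<in> V" using FU[OF U0] by blast
    have "dplots (subspace ?S U) n V (G \<circ> orbit_of \<Gamma>)" by (rule Gplot[OF Y_orbit_plot[OF oV]])
    then have "dplots ?S n V (G \<circ> orbit_of \<Gamma>)" unfolding sub_plots by blast
    then have "\<exists>W. open_Rn n W \<and> v \<in> W \<and> W \<subseteq> V \<and>
      (\<exists>q. (open_Rn n W \<and> smooth_scalar n W q) \<and> (\<forall>s\<in>W. (G \<circ> orbit_of \<Gamma>) s = Z_orbit \<psi> (q s)))"
      using v unfolding S_plots by blast
    then obtain W q where W: "open_Rn n W" "v \<in> W" "W \<subseteq> V" and q: "smooth_scalar n W q"
      and Wq: "\<forall>s\<in>W. G (orbit_of \<Gamma> s) = Z_orbit \<psi> (q s)"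
      by auto
    have fib: "\<forall>s\<in>W. countable {s'\<in>W. q s' = q s}"
    proof
      fix s assume s: "s \<in> W"
      have "{s'\<in>W. q s' = q s} \<subseteq> orbit_of \<Gamma> s"
      proof
        fix s' assume s': "s' \<in> {s'\<in>W. q s' = q s}"
        then have "G (orbit_of \<Gamma> s') = G (orbit_of \<Gamma> s)" using Wq s by auto
        then have "F (G (orbit_of \<Gamma> s')) = F (G (orbit_of \<Gamma> s))" by simp
        then have "orbit_of \<Gamma> s' = orbit_of \<Gamma> s" using FG s s' W(3) by auto
        moreover have "s' \<in> Rn n" using s' W open_Rn_sub by blast
        ultimately show "s' \<in> orbit_of \<Gamma> s" using orbit_mem_self[OF sG] by metis
      qed
      moreover have "countable (orbit_of \<Gamma> s)" unfolding orbit_of_def using cG by simp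
      ultimately show "countable {s'\<in>W. q s' = q s}" using countable_subset by blast
    qed
    show False by (rule no_countable_fibers[OF W(1) 3 W(2) smooth_cont[OF q] fib])
  next
    case 2
    have sG1: "subgroup_Aff 1 \<Gamma>" using sG 2 by simp
    have oV1: "open_Rn 1 V" using oV 2 by simp
    have Gam: "\<Gamma> \<subseteq> Aff 1" using sG1 unfolding subgroup_Aff_def by blast
    have "dplots ?Y 1 {r \<in> Rn 1. ?P r \<in> U} (F \<circ> ?P)" by (rule Fplot[OF P0plot])
    then have "\<exists>W. open_Rn 1 W \<and> emb1 0 \<in> W \<and> W \<subseteq> {r \<in> Rn 1. ?P r \<in> U} \<and>
      (\<exists>q. (open_Rn 1 W \<and> smooth_Rn 1 n W q \<and> q ` W \<subseteq> V) \<and> (\<forall>s\<in>W. (F \<circ> ?P) s = orbit_of \<Gamma> (q s)))"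
      using e0 unfolding Y_plots by blast
    then obtain Wg qg where Wg: "open_Rn 1 Wg" "emb1 0 \<in> Wg" "Wg \<subseteq> {r \<in> Rn 1. ?P r \<in> U}"
      and qg: "smooth_Rn 1 n Wg qg" "qg ` Wg \<subseteq> V" and Wgq: "\<forall>s\<in>Wg. F (?P s) = orbit_of \<Gamma> (qg s)"
      by auto
    have qg1: "smooth_scalar 1 Wg (\<lambda>x. qg x 0)" using qg(1) 2 unfolding smooth_Rn_def by simp
    define gh where "gh t = qg (emb1 t) 0" for t
    define gh' where "gh' t = partial 1 Wg (\<lambda>x. qg x 0) 0 (emb1 t)" for t
    note gx = smooth1_extract[OF Wg(1) qg1]
    obtain rg where rg: "rg > 0" "\<And>t. \<bar>t - 0\<bar> < rg \<Longrightarrow> t \<in> {t. emb1 t \<in> Wg}"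
      using open_ball_real[OF open_pre1[OF Wg(1)], of 0] Wg(2) by auto
    have qge: "qg (emb1 t) = emb1 (gh t)" if "emb1 t \<in> Wg" for t
    proof -
      have "qg (emb1 t) \<in> Rn 1" using qg(2) that oV1 open_Rn_sub by blast
      then show ?thesis unfolding gh_def by (rule Rn1_emb)
    qed
    define v0 where "v0 = gh 0"
    have v0V: "emb1 v0 \<in> V" using qge[of 0] Wg(2) qg(2) by (auto simp: v0_def)
    have "dplots (subspace ?S U) n V (G \<circ> orbit_of \<Gamma>)" by (rule Gplot[OF Y_orbit_plot[OF oV]])
    then have "dplots ?S 1 V (G \<circ> orbit_of \<Gamma>)" unfolding sub_plots using 2 by simp
    then have "\<exists>W. open_Rn 1 W \<and> emb1 v0 \<in> W \<and> W \<subseteq> V \<and>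
      (\<exists>q. (open_Rn 1 W \<and> smooth_scalar 1 W q) \<and> (\<forall>s\<in>W. (G \<circ> orbit_of \<Gamma>) s = Z_orbit \<psi> (q s)))"
      using v0V unfolding S_plots by blast
    then obtain Wf qf where Wf: "open_Rn 1 Wf" "emb1 v0 \<in> Wf" "Wf \<subseteq> V" and qf: "smooth_scalar 1 Wf qf"
      and Wfq: "\<forall>s\<in>Wf. G (orbit_of \<Gamma> s) = Z_orbit \<psi> (qf s)"
      by auto
    define fh where "fh u = qf (emb1 u)" for u
    define fh' where "fh' u = partial 1 Wf qf 0 (emb1 u)" for u
    note fx = smooth1_extract[OF Wf(1) qf]
    obtain rf where rf: "rf > 0" "\<And>u. \<bar>u - v0\<bar> < rf \<Longrightarrow> u \<in> {u. emb1 u \<in> Wf}"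
      using open_ball_real[OF open_pre1[OF Wf(1)], of v0] Wf(2) by auto
    define coef where "coef \<gamma> = (SOME p. \<forall>u. \<gamma> (emb1 u) = emb1 (fst p * u + snd p))"
      for \<gamma> :: "(nat \<Rightarrow> real) \<Rightarrow> (nat \<Rightarrow> real)"
    have coef: "\<forall>u. \<gamma> (emb1 u) = emb1 (fst (coef \<gamma>) * u + snd (coef \<gamma>))" if "\<gamma> \<in> \<Gamma>" for \<gamma>
    proof -
      have "\<exists>p. \<forall>u. \<gamma> (emb1 u) = emb1 (fst p * u + snd p)" using aff1_coef that Gam by blast
      then show ?thesis unfolding coef_def by (rule someI_ex)
    qed
    have cM: "countable (coef ` \<Gamma>)" using cG by simp
    show False
    proof (rule core1[where fh=fh and fh'=fh' and gh=gh and gh'=gh' and vv=v0 and rf=rf and rg=rg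
          and M="coef ` \<Gamma>"])
      show "rf > 0" by (rule rf(1))
      show "rg > 0" by (rule rg(1))
      show "(fh has_real_derivative fh' u) (at u)" if "\<bar>u - v0\<bar> < rf" for u
        using fx(1) rf(2)[OF that] unfolding fh_def fh'_def by blast
      have "isCont (\<lambda>u. partial 1 Wf qf 0 (emb1 u)) v0"
        using fx(2) continuous_on_eq_continuous_at[OF open_pre1[OF Wf(1)]] Wf(2) by blast
      then show "isCont fh' v0" unfolding fh'_def by simp
      show "(gh has_real_derivative gh' t) (at t)" if "\<bar>t - 0\<bar> < rg" for t
        using gx(1) rg(2)[OF that] unfolding gh_def gh'_def by blast
      have "isCont (\<lambda>t. partial 1 Wg (\<lambda>x. qg x 0) 0 (emb1 t)) 0"
        using gx(2) continuous_on_eq_continuous_at[OF open_pre1[OF Wg(1)]] Wg(2) by blast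
      then show "isCont gh' 0" unfolding gh'_def by simp
      show "gh 0 = v0" by (simp add: v0_def)
      show "countable (coef ` \<Gamma>)" by (rule cM)
    next
      fix \<alpha> \<beta> u u'
      assume ab: "(\<alpha>, \<beta>) \<in> coef ` \<Gamma>" and u: "\<bar>u - v0\<bar> < rf" and u': "\<bar>u' - v0\<bar> < rf"
        and uu: "u' = \<alpha> * u + \<beta>"
      obtain \<gamma> where g: "\<gamma> \<in> \<Gamma>" "(\<alpha>, \<beta>) = coef \<gamma>" using ab by auto
      have "emb1 u' = \<gamma> (emb1 u)" using coef[OF g(1)] g(2) uu by (metis fst_conv snd_conv)
      then have "orbit_of \<Gamma> (emb1 u') = orbit_of \<Gamma> (emb1 u)" using orbit_of_act[OF sG1 g(1) emb1_Rn] by simp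
      moreover have "emb1 u \<in> Wf" "emb1 u' \<in> Wf" using rf(2)[OF u] rf(2)[OF u'] by auto
      ultimately have "Z_orbit \<psi> (fh u') = Z_orbit \<psi> (fh u)" using Wfq unfolding fh_def by metis
      then show "fh u' \<in> Z_orbit \<psi> (fh u)" using orbit_self[of "fh u'"] by simp
    next
      fix t t' :: real
      assume t: "\<bar>t\<bar> < rg" and t': "\<bar>t'\<bar> < rg" and Zt: "Z_orbit \<psi> t = Z_orbit \<psi> t'"
      have et: "emb1 t \<in> Wg" "emb1 t' \<in> Wg" using rg(2)[of t] rg(2)[of t'] t t' by auto
      have "?P (emb1 t) = ?P (emb1 t')" using Zt by simp
      then have "orbit_of \<Gamma> (qg (emb1 t)) = orbit_of \<Gamma> (qg (emb1 t'))" using Wgq et by metis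
      then have "orbit_of \<Gamma> (emb1 (gh t)) = orbit_of \<Gamma> (emb1 (gh t'))" using qge et by simp
      then obtain \<gamma> where g: "\<gamma> \<in> \<Gamma>" "emb1 (gh t') = \<gamma> (emb1 (gh t))"
        using orbit_eq_mem[OF sG1 emb1_Rn] by blast
      then have "emb1 (gh t') = emb1 (fst (coef \<gamma>) * gh t + snd (coef \<gamma>))" using coef by simp
      then have "gh t' = fst (coef \<gamma>) * gh t + snd (coef \<gamma>)" by simp
      then show "\<exists>p\<in>coef ` \<Gamma>. gh t' = fst p * gh t + snd p" using g(1) by blast
    next
      fix t :: real
      assume t: "\<bar>t\<bar> < rg" and gt: "\<bar>gh t - v0\<bar> < rf"
      have et: "emb1 t \<in> Wg" using rg(2)[of t] t by auto
      then have PU: "Z_orbit \<psi> t \<in> U" using Wg(3) by auto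
      have ef: "emb1 (gh t) \<in> Wf" using rf(2)[OF gt] by simp
      have "Z_orbit \<psi> (fh (gh t)) = G (orbit_of \<Gamma> (emb1 (gh t)))" using Wfq ef unfolding fh_def by simp
      also have "\<dots> = G (orbit_of \<Gamma> (qg (emb1 t)))" using qge et by simp
      also have "\<dots> = G (F (?P (emb1 t)))" using Wgq[rule_format, OF et] by simp
      also have "\<dots> = Z_orbit \<psi> t" using GF PU by simp
      finally show "fh (gh t) \<in> Z_orbit \<psi> t" using orbit_self[of "fh (gh t)"] by simp
    qed
  qed
qed

end

theorem proposition8:
  fixes h \<psi> :: "real \<Rightarrow> real"
  assumes "smooth_real_fun h"
    and "flat_at h 0"
    and "\<forall>x. x \<noteq> 0 \<longrightarrow> h x > 0"
    and "complete_vf h"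
    and "time_one_flow h \<psi>"
  shows "\<not> quasifold (quotient_space real_space (Z_orbit \<psi>))"
proof -
  interpret flowsetup h \<psi> using assms by unfold_locales
  show ?thesis by (rule not_quasifold)
qed

end
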